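(* Let $d\ge 2$, $n\ge1$, $0\le k<n$ be integers. The number $N(n,k,d)$ of $[[n,k]]_d$ stabilizer codes equals $$N(n,k,d)=\frac{|\mathrm{Sp}(2n,\mathbb{Z}_d)|}{|T(n,k,d)|},$$ where $T(n,k,d)$ is the set of all $M\in\mathrm{Sp}(2n,\mathbb{Z}_d)$ which, in block form with respect to the partition of rows and columns into consecutive blocks of sizes $(n-k,k,n-k,k)$, have the form $$M=\begin{pmatrix}(A^T)^{-1}&0&0&0\\ M_{21}&M_{22}&0&M_{24}\\ M_{31}&M_{32}&A&M_{34}\\ M_{41}&M_{42}&0&M_{44}\end{pmatrix}$$ with $A\in\mathrm{GL}(n-k,\mathbb{Z}_d)$ and the other blocks arbitrary (for $k=0$: $M=\begin{pmatrix}(A^T)^{-1}&0\\ M_{31}&A\end{pmatrix}$).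
   Context: $\mathbb{Z}_d$ is the ring of integers mod $d$; $\Lambda=\begin{pmatrix}0&I_n\\-I_n&0\end{pmatrix}$, $\mathrm{Sp}(2n,\mathbb{Z}_d)=\{M\in M_{2n}(\mathbb{Z}_d):M^T\Lambda M=\Lambda\}$. Vectors $a_1,\dots,a_m\in\mathbb{Z}_d^{N}$ are linearly independent if $\sum_i x_ia_i=0$ with $x_i\in\mathbb{Z}_d$ forces all $x_i=0$. Qudits: on $\mathbb{C}^d$ with orthonormal basis $\{|j\rangle\}_{j\in\mathbb{Z}_d}$ let $X|j\rangle=|j+1\rangle$, $Z|j\rangle=\omega^j|j\rangle$, $\omega=e^{2\pi i/d}$. The $n$-qudit Pauli group $\mathcal{P}_n$ is generated by the operators $X_j,Z_j$ (acting as $X$, resp. $Z$, on the $j$-th tensor factor of $(\mathbb{C}^d)^{\otimes n}$), together with $e^{\pi i/d}I$ when $d$ is even. Every element of $\mathcal{P}_n$ is a phase times $g(a)=X^{u_1}Z^{v_1}\otimes\cdots\otimes X^{u_n}Z^{v_n}$ for a unique $a=(u,v)\in\mathbb{Z}_d^{2n}$, and $g(a),g(b)$ commute iff $a^T\Lambda b=0$. An $[[n,k]]_d$ stabilizer group is $S=\langle g_1,\dots,g_{n-k}\rangle$ with $g_j\in\mathcal{P}_n$ pairwise commuting, each having $+1$ as an eigenvalue, and $|S|=d^{n-k}$; its code space is $\mathcal{C}(S)=\{\psi: g\psi=\psi\ \forall g\in S\}$, of dimension $d^k$. Writing $g_j$ as a phase times $g(a_j)$, the check matrix is the $2n\times(n-k)$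 matrix $H=[a_1|\cdots|a_{n-k}]$; its columns are linearly independent and satisfy $a_i^T\Lambda a_j=0$. Two stabilizer groups define the same $[[n,k]]_d$ stabilizer code iff their check matrices satisfy $H'=HA$ for some $A\in\mathrm{GL}(n-k,\mathbb{Z}_d)$ (in particular, stabilizer groups differing only by phases of the generators define the same code); equivalently, a code is determined by the subgroup of $\mathbb{Z}_d^{2n}$ spanned by the columns of its check matrix, i.e. by the span of $n-k$ linearly independent, pairwise symplectically orthogonal vectors of $\mathbb{Z}_d^{2n}$. *)

theory Defs
  imports Complex_Main "HOL-Number_Theory.Cong"
begin

text \<open>Elements of Z_d are represented by their canonical representatives in {0..<d}.  Arithmetic is done in int and compared modulo d.\<close>

definition vecs :: "int \<Rightarrow> nat \<Rightarrow> (nat \<Rightarrow> int) set" where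
  "vecs d N = {v. (\<forall>i<N. v i \<in> {0..<d}) \<and> (\<forall>i\<ge>N. v i = 0)}"

definition mats :: "int \<Rightarrow> nat \<Rightarrow> (nat \<Rightarrow> nat \<Rightarrow> int) set" where
  "mats d m = {M. \<forall>i j. (i < m \<and> j < m \<longrightarrow> M i j \<in> {0..<d})
                      \<and> (\<not> (i < m \<and> j < m) \<longrightarrow> M i j = 0)}"

definition mmul :: "nat \<Rightarrow> (nat \<Rightarrow> nat \<Rightarrow> int) \<Rightarrow> (nat \<Rightarrow> nat \<Rightarrow> int) \<Rightarrow> nat \<Rightarrow> nat \<Rightarrow> int" where
  "mmul m A B = (\<lambda>i j. \<Sum>l<m. A i l * B l j)"

definition mtrans :: "(nat \<Rightarrow> nat \<Rightarrow> int) \<Rightarrow> nat \<Rightarrow> nat \<Rightarrow> int" where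
  "mtrans A = (\<lambda>i j. A j i)"

definition mident :: "nat \<Rightarrow> nat \<Rightarrow> int" where
  "mident = (\<lambda>i j. if i = j then 1 else 0)"

definition meq_mod :: "int \<Rightarrow> nat \<Rightarrow> (nat \<Rightarrow> nat \<Rightarrow> int) \<Rightarrow> (nat \<Rightarrow> nat \<Rightarrow> int) \<Rightarrow> bool" where
  "meq_mod d m A B = (\<forall>i<m. \<forall>j<m. [A i j = B i j] (mod d))"

definition gl_mod :: "int \<Rightarrow> nat \<Rightarrow> (nat \<Rightarrow> nat \<Rightarrow> int) set" where
  "gl_mod d m = {A \<in> mats d m. \<exists>B \<in> mats d m.
      meq_mod d m (mmul m A B) mident \<and> meq_mod d m (mmul m B A) mident}"

definition Lambda :: "nat \<Rightarrow> nat \<Rightarrow> nat \<Rightarrow> int" where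
  "Lambda n = (\<lambda>i j. if i < n \<and> j = i + n then 1
                     else if j < n \<and> i = j + n then -1 else 0)"

definition Sp :: "int \<Rightarrow> nat \<Rightarrow> (nat \<Rightarrow> nat \<Rightarrow> int) set" where
  "Sp d n = {M \<in> mats d (2*n).
     meq_mod d (2*n) (mmul (2*n) (mtrans M) (mmul (2*n) (Lambda n) M)) (Lambda n)}"

definition symp :: "nat \<Rightarrow> (nat \<Rightarrow> int) \<Rightarrow> (nat \<Rightarrow> int) \<Rightarrow> int" where
  "symp n a b = (\<Sum>i<2*n. \<Sum>j<2*n. a i * Lambda n i j * b j)"

definition lin_indep_mod :: "int \<Rightarrow> nat \<Rightarrow> nat \<Rightarrow> (nat \<Rightarrow> nat \<Rightarrow> int) \<Rightarrow> bool" where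
  "lin_indep_mod d N m a =
     (\<forall>x :: nat \<Rightarrow> int. (\<forall>i<N. [(\<Sum>j<m. x j * a j i) = 0] (mod d))
         \<longrightarrow> (\<forall>j<m. [x j = 0] (mod d)))"

definition span_mod :: "int \<Rightarrow> nat \<Rightarrow> nat \<Rightarrow> (nat \<Rightarrow> nat \<Rightarrow> int) \<Rightarrow> (nat \<Rightarrow> int) set" where
  "span_mod d N m a = {v \<in> vecs d N. \<exists>x :: nat \<Rightarrow> int.
      \<forall>i<N. [v i = (\<Sum>j<m. x j * a j i)] (mod d)}"

text \<open>The set of [[n,k]]_d stabilizer codes, each identified with the subgroup of
  Z_d^{2n} spanned by the columns of its check matrix.\<close>
definition stab_codes :: "nat \<Rightarrow> nat \<Rightarrow> int \<Rightarrow> (nat \<Rightarrow> int) set set" where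
  "stab_codes n k d = {span_mod d (2*n) (n-k) a | a.
      (\<forall>j<n-k. a j \<in> vecs d (2*n)) \<and> lin_indep_mod d (2*n) (n-k) a \<and>
      (\<forall>i<n-k. \<forall>j<n-k. [symp n (a i) (a j) = 0] (mod d))}"

definition N_codes :: "nat \<Rightarrow> nat \<Rightarrow> int \<Rightarrow> nat" where
  "N_codes n k d = card (stab_codes n k d)"

text \<open>The set T(n,k,d). With r = n-k, blocks are [0,r), [r,n), [n,n+r), [n+r,2n).\<close>
definition T_set :: "nat \<Rightarrow> nat \<Rightarrow> int \<Rightarrow> (nat \<Rightarrow> nat \<Rightarrow> int) set" where
  "T_set n k d = {M \<in> Sp d n.
     (\<forall>i<n-k. \<forall>j. n-k \<le> j \<and> j < 2*n \<longrightarrow> M i j = 0) \<and>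
     (\<forall>i<2*n. \<forall>j. n \<le> j \<and> j < n + (n-k) \<and> \<not> (n \<le> i \<and> i < n + (n-k)) \<longrightarrow> M i j = 0) \<and>
     (\<exists>A \<in> gl_mod d (n-k).
        (\<forall>i<n-k. \<forall>j<n-k. M (n+i) (n+j) = A i j) \<and>
        meq_mod d (n-k) (mmul (n-k) (\<lambda>i j. M i j) (mtrans A)) mident \<and>
        meq_mod d (n-k) (mmul (n-k) (mtrans A) (\<lambda>i j. M i j)) mident)}"

end

theory Submission
  imports Defs "HOL-Computational_Algebra.Primes"
begin
definition unitv :: "nat \<Rightarrow> nat \<Rightarrow> int" where
  "unitv k = (\<lambda>i. if i = k then 1 else 0)"

definition injm :: "int \<Rightarrow> nat \<Rightarrow> (nat \<Rightarrow> nat \<Rightarrow> int) \<Rightarrow> bool" where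
  "injm d N P = (\<forall>x. (\<forall>i<N. [(\<Sum>j<N. P i j * x j) = 0] (mod d)) \<longrightarrow> (\<forall>j<N. [x j = 0] (mod d)))"

lemma injmD: "injm d N P \<Longrightarrow> (\<forall>i<N. [(\<Sum>j<N. P i j * x j) = 0] (mod d)) \<Longrightarrow> j < N \<Longrightarrow> [x j = 0] (mod d)"
  unfolding injm_def by blast

lemma finite_vecs: "finite (vecs d N)"
proof -
  have "vecs d N \<subseteq> {f. \<forall>x. (x \<in> {..<N} \<longrightarrow> f x \<in> {0..<d}) \<and> (x \<notin> {..<N} \<longrightarrow> f x = 0)}"
    unfolding vecs_def by auto
  moreover have "finite {f. \<forall>x. (x \<in> {..<N} \<longrightarrow> f x \<in> {0..<d}) \<and> (x \<notin> {..<N} \<longrightarrow> f x = (0::int))}"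
    by (rule finite_set_of_finite_funs) auto
  ultimately show ?thesis by (rule finite_subset)
qed

lemma finite_mats: "finite (mats d m)"
proof -
  have "mats d m \<subseteq> {f. \<forall>x. (x \<in> {..<m} \<longrightarrow> f x \<in> vecs d m) \<and> (x \<notin> {..<m} \<longrightarrow> f x = (\<lambda>_. 0))}"
    unfolding vecs_def mats_def by auto
  moreover have "finite {f. \<forall>x. (x \<in> {..<m} \<longrightarrow> f x \<in> vecs d m) \<and> (x \<notin> {..<m} \<longrightarrow> f x = (\<lambda>_. (0::int)))}"
    by (rule finite_set_of_finite_funs) (auto simp: finite_vecs)
  ultimately show ?thesis by (rule finite_subset)
qed

lemma cong_range_eq:
  fixes d x y :: int
  shows "x \<in> {0..<d} \<Longrightarrow> y \<in> {0..<d} \<Longrightarrow> [x = y] (mod d) \<Longrightarrow> x = y"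
  using cong_less_imp_eq_int by auto

lemma mmul_ident_left: "i < m \<Longrightarrow> mmul m mident A i j = A i j"
  unfolding mmul_def mident_def by (simp add: if_distrib if_distribR cong: if_cong)

lemma mmul_ident_right: "j < m \<Longrightarrow> mmul m A mident i j = A i j"
  unfolding mmul_def mident_def by (simp add: if_distrib if_distribR cong: if_cong)

lemma mmul_assoc: "mmul m (mmul m A B) C = mmul m A (mmul m B C)"
  unfolding mmul_def
  by (auto simp: sum_distrib_left sum_distrib_right mult.assoc intro!: ext sum.swap[THEN trans])


lemma meq_mod_mmul_left:
  assumes "meq_mod d m A A'"
  shows "meq_mod d m (mmul m A B) (mmul m A' B)"
  using assms unfolding meq_mod_def mmul_def
  by (auto intro!: cong_sum cong_mult)

lemma meq_mod_mmul_right: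
  assumes "meq_mod d m B B'"
  shows "meq_mod d m (mmul m A B) (mmul m A B')"
  using assms unfolding meq_mod_def mmul_def
  by (auto intro!: cong_sum cong_mult)

lemma meq_mod_trans: "meq_mod d m A B \<Longrightarrow> meq_mod d m B C \<Longrightarrow> meq_mod d m A C"
  unfolding meq_mod_def using cong_trans by blast

lemma meq_mod_sym: "meq_mod d m A B \<Longrightarrow> meq_mod d m B A"
  unfolding meq_mod_def using cong_sym by blast

lemma meq_mod_refl: "meq_mod d m A A"
  unfolding meq_mod_def by auto

lemma meq_mod_ident_left: "meq_mod d m (mmul m mident A) A"
  unfolding meq_mod_def by (simp add: mmul_ident_left)

lemma meq_mod_ident_right: "meq_mod d m (mmul m A mident) A"
  unfolding meq_mod_def by (simp add: mmul_ident_right)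

lemma SQ:
  assumes inj: "injm d N P" and PU: "meq_mod d N (mmul N P U) mident"
  shows "meq_mod d N (mmul N U P) mident"
  unfolding meq_mod_def
proof (intro allI impI)
  fix i k assume i: "i < N" and k: "k < N"
  define x where "x = (\<lambda>l. mmul N U P l k - mident l k)"
  have "\<forall>i'<N. [(\<Sum>l<N. P i' l * x l) = 0] (mod d)"
  proof (intro allI impI)
    fix i' assume i': "i' < N"
    have "(\<Sum>l<N. P i' l * x l) = mmul N P (mmul N U P) i' k - mmul N P mident i' k"
      unfolding x_def mmul_def by (simp add: right_diff_distrib sum_subtractf)
    also have "mmul N P (mmul N U P) i' k = mmul N (mmul N P U) P i' k"
      by (simp add: mmul_assoc)
    also have "mmul N P mident i' k = P i' k" using k by (simp add: mmul_ident_right)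
    finally have e: "(\<Sum>l<N. P i' l * x l) = mmul N (mmul N P U) P i' k - P i' k" .
    have "[mmul N (mmul N P U) P i' k = mmul N mident P i' k] (mod d)"
      using meq_mod_mmul_left[OF PU, of P] i' k unfolding meq_mod_def by blast
    also have "mmul N mident P i' k = P i' k" using i' by (simp add: mmul_ident_left)
    finally have "[mmul N (mmul N P U) P i' k - P i' k = P i' k - P i' k] (mod d)"
      by (rule cong_diff) simp
    then show "[(\<Sum>l<N. P i' l * x l) = 0] (mod d)" using e by simp
  qed
  then have "[x i = 0] (mod d)" using injmD[OF inj, of x] i by blast
  then show "[mmul N U P i k = mident i k] (mod d)"
    unfolding x_def by (simp add: cong_iff_dvd_diff)
qed

lemma unitv_vecs: "d \<ge> 2 \<Longrightarrow> k < N \<Longrightarrow> unitv k \<in> vecs d N"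
  unfolding unitv_def vecs_def by auto

lemma INV:
  assumes d: "d \<ge> 2" and inj: "injm d N P"
  shows "\<exists>U. meq_mod d N (mmul N P U) mident \<and> meq_mod d N (mmul N U P) mident"
proof -
  define f where "f x = (\<lambda>i. if i < N then (\<Sum>j<N. P i j * x j) mod d else 0)" for x
  have fv: "f ` vecs d N \<subseteq> vecs d N"
    using d unfolding f_def vecs_def by auto
  have finj: "inj_on f (vecs d N)"
  proof (rule inj_onI)
    fix x y assume x: "x \<in> vecs d N" and y: "y \<in> vecs d N" and fxy: "f x = f y"
    have "\<forall>i<N. [(\<Sum>j<N. P i j * (x j - y j)) = 0] (mod d)"
    proof (intro allI impI)
      fix i assume i: "i < N"
      have "(\<Sum>j<N. P i j * x j) mod d = (\<Sum>j<N. P i j * y j) mod d"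
        using fun_cong[OF fxy, of i] i unfolding f_def by simp
      then have "[(\<Sum>j<N. P i j * x j) - (\<Sum>j<N. P i j * y j) = 0] (mod d)"
        by (simp add: cong_def mod_diff_cong)
      then show "[(\<Sum>j<N. P i j * (x j - y j)) = 0] (mod d)"
        by (simp add: right_diff_distrib sum_subtractf)
    qed
    then have "\<forall>j<N. [x j - y j = 0] (mod d)"
      using injmD[OF inj, of "\<lambda>j. x j - y j"] by blast
    then have "\<forall>j<N. x j = y j"
    proof (intro allI impI)
      fix j assume j: "j < N" and h: "\<forall>j<N. [x j - y j = 0] (mod d)"
      then have "[x j - y j = 0] (mod d)" by blast
      then have "[x j = y j] (mod d)" by (simp add: cong_iff_dvd_diff)
      then show "x j = y j" using x y j unfolding vecs_def by (intro cong_range_eq) auto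
    qed
    then show "x = y"
    proof (intro ext)
      fix j assume h: "\<forall>j<N. x j = y j"
      show "x j = y j"
      proof (cases "j < N")
        case False then show ?thesis using x y unfolding vecs_def by simp
      qed (use h in simp)
    qed
  qed
  have fs: "f ` vecs d N = vecs d N"
    by (rule endo_inj_surj[OF finite_vecs fv finj])
  have "\<forall>k. \<exists>v. k < N \<longrightarrow> v \<in> vecs d N \<and> f v = unitv k"
  proof
    fix k show "\<exists>v. k < N \<longrightarrow> v \<in> vecs d N \<and> f v = unitv k"
    proof (cases "k < N")
      case True
      then have "unitv k \<in> f ` vecs d N" using fs unitv_vecs[OF d] by auto
      then show ?thesis by auto
    qed auto
  qed
  then obtain u where u: "\<And>k. k < N \<Longrightarrow> u k \<in> vecs d N \<and> f (u k) = unitv k"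
    by metis
  define U where "U = (\<lambda>j k. u k j)"
  have PU: "meq_mod d N (mmul N P U) mident"
    unfolding meq_mod_def
  proof (intro allI impI)
    fix i k assume i: "i < N" and k: "k < N"
    have "f (u k) i = unitv k i" using u[OF k] by simp
    then have "(\<Sum>j<N. P i j * u k j) mod d = unitv k i" using i unfolding f_def by simp
    then have "(\<Sum>j<N. P i j * u k j) mod d = mident i k mod d"
      using d by (auto simp: unitv_def mident_def)
    then show "[mmul N P U i k = mident i k] (mod d)"
      unfolding mmul_def U_def cong_def by simp
  qed
  show ?thesis using PU SQ[OF inj PU] by blast
qed

lemma indepD: "lin_indep_mod d N m a \<Longrightarrow> (\<forall>i<N. [(\<Sum>j<m. x j * a j i) = 0] (mod d)) \<Longrightarrow> j < m \<Longrightarrow> [x j = 0] (mod d)"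
  unfolding lin_indep_mod_def by blast

lemma indep_factor:
  assumes ind: "lin_indep_mod (d1 * d2) N m a" and d2: "d2 \<noteq> 0"
  shows "lin_indep_mod d1 N m a"
  unfolding lin_indep_mod_def
proof (intro allI impI)
  fix x j assume h: "\<forall>i<N. [(\<Sum>j<m. x j * a j i) = 0] (mod d1)" and j: "j < m"
  have "\<forall>i<N. [(\<Sum>j<m. (d2 * x j) * a j i) = 0] (mod d1 * d2)"
  proof (intro allI impI)
    fix i assume "i < N"
    then have "d1 dvd (\<Sum>j<m. x j * a j i)" using h by (simp add: cong_0_iff)
    then have "d1 * d2 dvd d2 * (\<Sum>j<m. x j * a j i)" by (simp add: mult.commute)
    then show "[(\<Sum>j<m. (d2 * x j) * a j i) = 0] (mod d1 * d2)"
      by (simp add: cong_0_iff sum_distrib_left mult.assoc)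
  qed
  from indepD[OF ind this j] have "d1 * d2 dvd d2 * x j" by (simp add: cong_0_iff)
  then have "d1 dvd x j" using d2 by (simp add: mult.commute)
  then show "[x j = 0] (mod d1)" by (simp add: cong_0_iff)
qed

lemma indep_cong:
  assumes ind: "lin_indep_mod d N m a" and c: "\<forall>j<m. \<forall>i<N. [b j i = a j i] (mod d)"
  shows "lin_indep_mod d N m b"
  unfolding lin_indep_mod_def
proof (intro allI impI)
  fix x j assume h: "\<forall>i<N. [(\<Sum>j<m. x j * b j i) = 0] (mod d)" and j: "j < m"
  have "\<forall>i<N. [(\<Sum>j<m. x j * a j i) = 0] (mod d)"
  proof (intro allI impI)
    fix i assume i: "i < N"
    have "[(\<Sum>j<m. x j * a j i) = (\<Sum>j<m. x j * b j i)] (mod d)"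
      using c i by (intro cong_sum cong_mult) (auto simp: cong_sym)
    then show "[(\<Sum>j<m. x j * a j i) = 0] (mod d)" using h i cong_trans by blast
  qed
  then show "[x j = 0] (mod d)" using indepD[OF ind] j by blast
qed

lemma indep_coprime:
  assumes "lin_indep_mod d1 N m a" "lin_indep_mod d2 N m a" "coprime d1 d2"
  shows "lin_indep_mod (d1 * d2) N m a"
  unfolding lin_indep_mod_def
proof (intro allI impI)
  fix x j assume h: "\<forall>i<N. [(\<Sum>j<m. x j * a j i) = 0] (mod d1 * d2)" and j: "j < m"
  have "\<forall>i<N. [(\<Sum>j<m. x j * a j i) = 0] (mod d1)" using h cong_modulus_mult by blast
  then have 1: "[x j = 0] (mod d1)" using indepD[OF assms(1)] j by blast
  have "\<forall>i<N. [(\<Sum>j<m. x j * a j i) = 0] (mod d2)" using h cong_modulus_mult[of _ _ d2 d1]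
    by (simp add: mult.commute)
  then have 2: "[x j = 0] (mod d2)" using indepD[OF assms(2)] j by blast
  show "[x j = 0] (mod d1 * d2)" using coprime_cong_mult[OF 1 2 assms(3)] .
qed

lemma IP1:
  fixes p :: int
  assumes ind: "lin_indep_mod (p ^ e) N m a" and e: "e \<ge> 1" and p: "p \<noteq> 0"
  shows "lin_indep_mod p N m a"
  unfolding lin_indep_mod_def
proof (intro allI impI)
  fix x j assume h: "\<forall>i<N. [(\<Sum>j<m. x j * a j i) = 0] (mod p)" and j: "j < m"
  have pe: "p ^ e = p ^ (e - 1) * p" using e by (metis Suc_diff_le diff_Suc_1 mult.commute power_Suc)
  have "\<forall>i<N. [(\<Sum>j<m. (p ^ (e - 1) * x j) * a j i) = 0] (mod p ^ e)"
  proof (intro allI impI)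
    fix i assume "i < N"
    then have "p dvd (\<Sum>j<m. x j * a j i)" using h by (simp add: cong_0_iff)
    then have "p ^ (e - 1) * p dvd p ^ (e - 1) * (\<Sum>j<m. x j * a j i)" by simp
    then show "[(\<Sum>j<m. (p ^ (e - 1) * x j) * a j i) = 0] (mod p ^ e)"
      by (simp add: pe cong_0_iff sum_distrib_left mult.assoc)
  qed
  from indepD[OF ind this j] have "p ^ (e - 1) * p dvd p ^ (e - 1) * x j" by (simp add: cong_0_iff pe)
  then have "p dvd x j" using p by simp
  then show "[x j = 0] (mod p)" by (simp add: cong_0_iff)
qed

lemma IP2:
  fixes p :: int
  assumes ind: "lin_indep_mod p N m a" and p: "p \<noteq> 0"
  shows "lin_indep_mod (p ^ e) N m a"
proof -
  have "\<forall>x. (\<forall>i<N. p ^ e dvd (\<Sum>j<m. x j * a j i)) \<longrightarrow> (\<forall>j<m. p ^ e dvd x j)"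
  proof (induction e)
    case 0 then show ?case by simp
  next
    case (Suc e)
    show ?case
    proof (intro allI impI)
      fix x j assume h: "\<forall>i<N. p ^ Suc e dvd (\<Sum>j<m. x j * a j i)" and j: "j < m"
      have "\<forall>i<N. p ^ e dvd (\<Sum>j<m. x j * a j i)"
        using h by (metis dvd_mult_left power_Suc2)
      then have xe: "\<forall>j<m. p ^ e dvd x j" using Suc.IH by blast
      define y where "y = (\<lambda>j. x j div p ^ e)"
      have xy: "\<forall>j<m. x j = p ^ e * y j" using xe unfolding y_def by simp
      have "\<forall>i<N. [(\<Sum>j<m. y j * a j i) = 0] (mod p)"
      proof (intro allI impI)
        fix i assume i: "i < N"
        have "(\<Sum>j<m. x j * a j i) = p ^ e * (\<Sum>j<m. y j * a j i)"
          using xy by (simp add: sum_distrib_left mult.assoc)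
        then have "p ^ e * p dvd p ^ e * (\<Sum>j<m. y j * a j i)" using h i
          by (metis power_Suc2)
        then have "p dvd (\<Sum>j<m. y j * a j i)" using p by simp
        then show "[(\<Sum>j<m. y j * a j i) = 0] (mod p)" by (simp add: cong_0_iff)
      qed
      then have "p dvd y j" using indepD[OF ind] j by (simp add: cong_0_iff)
      then have "p ^ e * p dvd p ^ e * y j" by simp
      then show "p ^ Suc e dvd x j" using xy j by (simp add: power_Suc2)
    qed
  qed
  then show ?thesis unfolding lin_indep_mod_def by (simp add: cong_0_iff)
qed

lemma sum_Suc_upd: "(\<Sum>j<Suc m. x j * (a(m := w)) j t) = (\<Sum>j<m. x j * a j t) + x m * w t"
  by simp

lemma vecs_mono: "m \<le> N \<Longrightarrow> d > 0 \<Longrightarrow> vecs d m \<subseteq> vecs d N"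
proof
  fix x assume mN: "m \<le> N" and d: "d > 0" and x: "x \<in> vecs d m"
  show "x \<in> vecs d N" unfolding vecs_def
  proof (intro CollectI conjI allI impI)
    fix i assume "i < N"
    show "x i \<in> {0..<d}"
    proof (cases "i < m")
      case False then have "x i = 0" using x unfolding vecs_def by simp
      then show ?thesis using d by simp
    qed (use x in \<open>auto simp: vecs_def\<close>)
  next
    fix i assume "N \<le> i" then show "x i = 0" using x mN unfolding vecs_def by simp
  qed
qed

lemma dep_coeffs:
  fixes p :: int
  assumes p: "prime p" and ind: "lin_indep_mod p N m a" and nd: "\<not> lin_indep_mod p N (Suc m) (a(m := w))"
  shows "\<exists>c. \<forall>t<N. [w t = (\<Sum>j<m. c j * a j t)] (mod p)"
proof -
  obtain x where hx0: "\<forall>t<N. [(\<Sum>j<Suc m. x j * (a(m := w)) j t) = 0] (mod p)"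
    and j0: "\<exists>j<Suc m. \<not> [x j = 0] (mod p)"
    using nd unfolding lin_indep_mod_def by blast
  have hx: "\<forall>t<N. [(\<Sum>j<m. x j * a j t) + x m * w t = 0] (mod p)"
    using hx0 by simp
  have nd: "\<not> p dvd x m"
  proof
    assume xm: "p dvd x m"
    have "\<forall>t<N. [(\<Sum>j<m. x j * a j t) = 0] (mod p)"
    proof (intro allI impI)
      fix t assume t: "t < N"
      have "[x m * w t = 0] (mod p)" using xm by (simp add: cong_0_iff)
      then have 1: "[(\<Sum>j<m. x j * a j t) + x m * w t = (\<Sum>j<m. x j * a j t) + 0] (mod p)"
        by (intro cong_add) auto
      have 2: "[(\<Sum>j<m. x j * a j t) + x m * w t = 0] (mod p)" using hx t by blast
      from 1 2 show "[(\<Sum>j<m. x j * a j t) = 0] (mod p)"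
        by (metis add.right_neutral cong_sym cong_trans)
    qed
    then have "\<forall>j<m. [x j = 0] (mod p)" using indepD[OF ind] by blast
    moreover have "[x m = 0] (mod p)" using xm by (simp add: cong_0_iff)
    ultimately show False using j0 less_Suc_eq by auto
  qed
  then have "coprime (x m) p" using p by (simp add: prime_imp_coprime coprime_commute)
  then obtain y where y: "[x m * y = 1] (mod p)" using cong_solve_coprime_int by blast
  have "\<forall>t<N. [w t = (\<Sum>j<m. (- (y * x j)) * a j t)] (mod p)"
  proof (intro allI impI)
    fix t assume t: "t < N"
    define S where "S = (\<Sum>j<m. x j * a j t)"
    have h: "[S + x m * w t = 0] (mod p)" using hx t unfolding S_def by blast
    have "[y * (S + x m * w t) = y * 0] (mod p)" using h by (intro cong_mult) auto
    then have e1: "[y * S + (x m * y) * w t = 0] (mod p)" by (simp add: algebra_simps)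
    have e2: "[y * S + (x m * y) * w t = y * S + 1 * w t] (mod p)"
      using y by (intro cong_add cong_mult) auto
    from e1 e2 have "[y * S + w t = 0] (mod p)" by (metis cong_sym cong_trans mult_1)
    then have "[w t = - (y * S)] (mod p)" by (simp add: cong_iff_dvd_diff algebra_simps)
    then show "[w t = (\<Sum>j<m. (- (y * x j)) * a j t)] (mod p)"
      unfolding S_def by (simp add: sum_distrib_left sum_negf mult.assoc)
  qed
  then show ?thesis by (rule exI[of _ "\<lambda>j. - (y * x j)"])
qed

lemma LE:
  fixes p :: int
  assumes p: "prime p" and ind: "lin_indep_mod p N m a" and mN: "m < N"
  shows "\<exists>i<N. lin_indep_mod p N (Suc m) (a(m := unitv i))"
proof (rule ccontr)
  assume "\<not> ?thesis"
  then have nind: "\<forall>i<N. \<not> lin_indep_mod p N (Suc m) (a(m := unitv i))" by blast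
  have p2: "p \<ge> 2" using p by (simp add: prime_ge_2_int)
  have "\<forall>i. \<exists>c. i < N \<longrightarrow> (\<forall>t<N. [unitv i t = (\<Sum>j<m. c j * a j t)] (mod p))"
  proof
    fix i show "\<exists>c. i < N \<longrightarrow> (\<forall>t<N. [unitv i t = (\<Sum>j<m. c j * a j t)] (mod p))"
    proof (cases "i < N")
      case True
      then obtain c where "\<forall>t<N. [unitv i t = (\<Sum>j<m. c j * a j t)] (mod p)"
        using dep_coeffs[OF p ind, of "unitv i"] nind by blast
      then show ?thesis by (intro exI[of _ c]) simp
    qed auto
  qed
  then obtain C where C: "\<And>i t. i < N \<Longrightarrow> t < N \<Longrightarrow> [unitv i t = (\<Sum>j<m. C i j * a j t)] (mod p)"
    by (metis choice)
  define F where "F x = (\<lambda>t. if t < N then (\<Sum>j<m. x j * a j t) mod p else 0)" for x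
  define g where "g v = (\<lambda>j. if j < m then (\<Sum>i<N. v i * C i j) mod p else 0)" for v
  have sub: "vecs p N \<subseteq> F ` vecs p m"
  proof
    fix v assume v: "v \<in> vecs p N"
    have gv: "g v \<in> vecs p m" using p2 unfolding g_def vecs_def by auto
    have "v = F (g v)"
    proof
      fix t show "v t = F (g v) t"
      proof (cases "t < N")
        case False then show ?thesis using v unfolding vecs_def F_def by simp
      next
        case t: True
        have "v t = (\<Sum>i<N. v i * unitv i t)"
          using t by (simp add: unitv_def if_distrib cong: if_cong)
        also have "[(\<Sum>i<N. v i * unitv i t) = (\<Sum>i<N. v i * (\<Sum>j<m. C i j * a j t))] (mod p)"
          using C t by (intro cong_sum cong_mult) auto
        also have "(\<Sum>i<N. v i * (\<Sum>j<m. C i j * a j t)) = (\<Sum>j<m. (\<Sum>i<N. v i * C i j) * a j t)"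
          unfolding sum_distrib_left sum_distrib_right mult.assoc by (rule sum.swap)
        also have "[(\<Sum>j<m. (\<Sum>i<N. v i * C i j) * a j t) = (\<Sum>j<m. g v j * a j t)] (mod p)"
          unfolding g_def by (intro cong_sum cong_mult) (auto simp: cong_def)
        finally have "[v t = (\<Sum>j<m. g v j * a j t)] (mod p)" .
        then have "v t mod p = (\<Sum>j<m. g v j * a j t) mod p" by (simp add: cong_def)
        moreover have "v t mod p = v t" using v t unfolding vecs_def by simp
        ultimately show ?thesis using t unfolding F_def by simp
      qed
    qed
    then show "v \<in> F ` vecs p m" using gv by blast
  qed
  have "card (vecs p N) \<le> card (F ` vecs p m)"
    by (rule card_mono[OF _ sub]) (simp add: finite_vecs)
  also have "\<dots> \<le> card (vecs p m)" by (rule card_image_le[OF finite_vecs])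
  finally have le: "card (vecs p N) \<le> card (vecs p m)" .
  have "vecs p m \<subset> vecs p N"
  proof
    show "vecs p m \<subseteq> vecs p N" using mN p2 by (intro vecs_mono) auto
    have "unitv m \<in> vecs p N" using unitv_vecs[OF p2 mN] .
    moreover have "unitv m \<notin> vecs p m" unfolding vecs_def unitv_def by auto
    ultimately show "vecs p m \<noteq> vecs p N" by blast
  qed
  then have "card (vecs p m) < card (vecs p N)" by (rule psubset_card_mono[OF finite_vecs])
  then show False using le by simp
qed

lemma indep_mod1: "lin_indep_mod 1 N m a"
  unfolding lin_indep_mod_def by (simp add: cong_def)

lemma ext_one_aux:
  assumes mN: "m < N"
  shows "\<forall>d::int. nat d = k \<longrightarrow> d \<ge> 1 \<longrightarrow> (\<forall>a. lin_indep_mod d N m a \<longrightarrow> (\<exists>w. lin_indep_mod d N (Suc m) (a(m := w))))"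
proof (induction k rule: less_induct)
  case (less k)
  show ?case
  proof (intro allI impI)
    fix d :: int and a
    assume dk: "nat d = k" and d1: "d \<ge> 1" and ind: "lin_indep_mod d N m a"
    show "\<exists>w. lin_indep_mod d N (Suc m) (a(m := w))"
    proof (cases "d = 1")
      case True then show ?thesis using indep_mod1 by blast
    next
      case False
      then have d2: "d \<ge> 2" using d1 by simp
      then have "\<not> is_unit d" by simp
      then obtain p where pd: "p dvd d" and p: "prime p" using prime_divisor_exists[of d] d2 by auto
      have p2: "p \<ge> 2" using p by (simp add: prime_ge_2_int)
      define e where "e = multiplicity p d"
      have "\<not> is_unit p" using p2 by simp
      then obtain y where dy: "d = p ^ e * y" and npy: "\<not> p dvd y"
        using multiplicity_decompose'[of d p] d2 unfolding e_def by auto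
      have e: "e \<ge> 1" using prime_multiplicity_gt_zero_iff[of p d] p pd d2 unfolding e_def
        using p2 by (simp add: prime_elem_iff_prime_abs)
      have pe: "p ^ e \<ge> 2"
      proof -
        have "p ^ e \<ge> p ^ 1" using e p2 by (intro power_increasing) auto
        then show ?thesis using p2 by simp
      qed
      have ypos: "y > 0"
      proof (rule ccontr)
        assume "\<not> y > 0"
        then have "p ^ e * y \<le> 0" using pe by (simp add: mult_nonneg_nonpos)
        then show False using dy d2 by simp
      qed
      show ?thesis
      proof (cases "y = 1")
        case True
        then have dpe: "d = p ^ e" using dy by simp
        have "lin_indep_mod p N m a" using IP1[of p e N m a] ind dpe e p2 by simp
        then obtain i where "i < N" and ii: "lin_indep_mod p N (Suc m) (a(m := unitv i))"
          using LE[OF p _ mN] by blast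
        have "lin_indep_mod (p ^ e) N (Suc m) (a(m := unitv i))"
          by (rule IP2[OF ii]) (use p2 in simp)
        then show ?thesis using dpe by blast
      next
        case False
        then have y2: "y \<ge> 2" using ypos by simp
        define d1 where "d1 = p ^ e"
        have dd: "d = d1 * y" using dy d1_def by simp
        have "d1 * 1 < d1 * y" using y2 pe d1_def by (intro mult_strict_left_mono) auto
        then have "d1 < d" using dd by simp
        then have lt1: "nat d1 < k" using dk pe d1_def by simp
        have "1 * y < d1 * y" using y2 pe d1_def by (intro mult_strict_right_mono) auto
        then have "y < d" using dd by simp
        then have lt2: "nat y < k" using dk y2 by simp
        have i1: "lin_indep_mod d1 N m a" using indep_factor[of d1 y N m a] ind dd y2 by simp
        have "lin_indep_mod (y * d1) N m a" using ind dd by (simp add: mult.commute)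
        then have i2: "lin_indep_mod y N m a" by (rule indep_factor) (use p2 d1_def in simp)
        have "d1 \<ge> 1" using pe d1_def by simp
        then obtain w1 where w1: "lin_indep_mod d1 N (Suc m) (a(m := w1))"
          using less.IH[OF lt1, rule_format, OF refl _ i1] by blast
        have "y \<ge> 1" using y2 by simp
        then obtain w2 where w2: "lin_indep_mod y N (Suc m) (a(m := w2))"
          using less.IH[OF lt2, rule_format, OF refl _ i2] by blast
        have cop: "coprime d1 y"
        proof -
          have "coprime p y" using p npy by (simp add: prime_imp_coprime)
          then show ?thesis unfolding d1_def by simp
        qed
        have "\<forall>i. \<exists>z. [z = w1 i] (mod d1) \<and> [z = w2 i] (mod y)"
          using binary_chinese_remainder_int[OF cop] by blast
        then obtain w where w: "\<And>i. [w i = w1 i] (mod d1) \<and> [w i = w2 i] (mod y)"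
          by (metis choice)
        have "lin_indep_mod d1 N (Suc m) (a(m := w))"
          by (rule indep_cong[OF w1]) (use w in auto)
        moreover have "lin_indep_mod y N (Suc m) (a(m := w))"
          by (rule indep_cong[OF w2]) (use w in auto)
        ultimately have "lin_indep_mod (d1 * y) N (Suc m) (a(m := w))"
          by (rule indep_coprime[OF _ _ cop])
        then show ?thesis using dd by blast
      qed
    qed
  qed
qed

lemma ext_one:
  fixes d :: int
  assumes "d \<ge> 1" "lin_indep_mod d N m a" "m < N"
  shows "\<exists>w. lin_indep_mod d N (Suc m) (a(m := w))"
  using ext_one_aux[OF assms(3), of "nat d"] assms by blast

lemma Ext_aux:
  fixes d :: int
  assumes d: "d \<ge> 1"
  shows "N - m = k \<Longrightarrow> lin_indep_mod d N m a \<Longrightarrow> m \<le> N \<Longrightarrow> \<exists>c. lin_indep_mod d N N c \<and> (\<forall>j<m. c j = a j)"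
proof (induction k arbitrary: m a)
  case 0
  then have "m = N" by simp
  then show ?case using 0 by (intro exI[of _ a]) simp
next
  case (Suc k)
  then have mN: "m < N" by simp
  obtain w where w: "lin_indep_mod d N (Suc m) (a(m := w))" using ext_one[OF d Suc.prems(2) mN] by blast
  have "N - Suc m = k" using Suc.prems by simp
  then obtain c where c: "lin_indep_mod d N N c" "\<forall>j<Suc m. c j = (a(m := w)) j"
    using Suc.IH[OF _ w] mN by fastforce
  then show ?case by (intro exI[of _ c]) auto
qed

lemma Ext:
  fixes d :: int
  assumes "d \<ge> 1" "lin_indep_mod d N m a" "m \<le> N"
  shows "\<exists>c. lin_indep_mod d N N c \<and> (\<forall>j<m. c j = a j)"
  using Ext_aux[OF assms(1) refl assms(2,3)] .

lemma indep_injm: "lin_indep_mod d N N c \<Longrightarrow> injm d N (\<lambda>t j. c j t)"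
  unfolding lin_indep_mod_def injm_def by (simp add: mult.commute)

lemma Dual:
  fixes d :: int
  assumes d: "d \<ge> 2" and ind: "lin_indep_mod d N m a" and mN: "m \<le> N"
  shows "\<exists>U. \<forall>k<m. \<forall>j<m. [(\<Sum>t<N. U k t * a j t) = mident k j] (mod d)"
proof -
  obtain c where c: "lin_indep_mod d N N c" "\<forall>j<m. c j = a j" using Ext[OF _ ind mN] d by auto
  obtain U where U: "meq_mod d N (mmul N U (\<lambda>t j. c j t)) mident"
    using INV[OF d indep_injm[OF c(1)]] by blast
  show ?thesis
  proof (intro exI[of _ U] allI impI)
    fix k j assume k: "k < m" and j: "j < m"
    then have "[mmul N U (\<lambda>t j. c j t) k j = mident k j] (mod d)"
      using U mN unfolding meq_mod_def by auto
    then show "[(\<Sum>t<N. U k t * a j t) = mident k j] (mod d)"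
      using c(2) j unfolding mmul_def by simp
  qed
qed

lemma sum_split_add: "(\<Sum>j<a+(b::nat). f j) = (\<Sum>j<a. f j) + (\<Sum>j<b. f (a+j))"
  by (induction b) (auto simp: add.assoc)

lemma Lam_apply:
  assumes i: "i < 2*n"
  shows "(\<Sum>l<2*n. Lambda n i l * v l) = (if i < n then v (i+n) else - v (i-n))"
proof (cases "i < n")
  case True
  have "\<And>l. Lambda n i l * v l = (if l = i + n then v l else 0)"
    using True by (auto simp: Lambda_def)
  then have "(\<Sum>l<2*n. Lambda n i l * v l) = (\<Sum>l<2*n. if l = i + n then v l else 0)" by simp
  also have "\<dots> = v (i+n)" using True by (simp add: sum.delta')
  finally show ?thesis using True by simp
next
  case False
  have "\<And>l. Lambda n i l * v l = (if l = i - n then - v l else 0)"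
    using False i by (auto simp: Lambda_def)
  then have "(\<Sum>l<2*n. Lambda n i l * v l) = (\<Sum>l<2*n. if l = i - n then - v l else 0)" by simp
  also have "\<dots> = - v (i-n)" using False i by (simp add: sum.delta')
  finally show ?thesis using False by simp
qed

lemma symp_alt: "symp n u v = (\<Sum>i<2*n. u i * (if i < n then v (i+n) else - v (i-n)))"
proof -
  have "symp n u v = (\<Sum>i<2*n. u i * (\<Sum>l<2*n. Lambda n i l * v l))"
    unfolding symp_def by (simp add: sum_distrib_left mult.assoc)
  also have "\<dots> = (\<Sum>i<2*n. u i * (if i < n then v (i+n) else - v (i-n)))"
    by (rule sum.cong) (auto simp: Lam_apply simp del: mult_minus_right)
  finally show ?thesis .
qed

lemma symp_expl: "symp n u v = (\<Sum>i<n. u i * v (i+n) - u (i+n) * v i)"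
proof -
  have "symp n u v = (\<Sum>i<n+n. u i * (if i < n then v (i+n) else - v (i-n)))"
    unfolding symp_alt by (simp add: mult_2)
  also have "\<dots> = (\<Sum>i<n. u i * v (i+n)) + (\<Sum>i<n. - (u (n+i) * v i))"
    unfolding sum_split_add by simp
  also have "\<dots> = (\<Sum>i<n. u i * v (i+n) - u (i+n) * v i)"
    by (simp add: sum_subtractf sum_negf add.commute)
  finally show ?thesis .
qed

lemma symp_antisym: "symp n u v = - symp n v u"
  unfolding symp_expl by (simp add: sum_negf[symmetric] algebra_simps)

lemma symp_self: "symp n u u = 0"
  using symp_antisym[of n u u] by simp

lemma symp_lc_left: "symp n (\<lambda>t. \<Sum>j<m. x j * a j t) v = (\<Sum>j<m. x j * symp n (a j) v)"
proof -
  define w where "w i = (if i < n then v (i+n) else - v (i-n))" for i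
  have "symp n (\<lambda>t. \<Sum>j<m. x j * a j t) v = (\<Sum>i<2*n. \<Sum>j<m. x j * (a j i * w i))"
    unfolding symp_alt w_def by (simp add: sum_distrib_right mult.assoc)
  also have "\<dots> = (\<Sum>j<m. \<Sum>i<2*n. x j * (a j i * w i))"
    by (rule sum.swap)
  also have "\<dots> = (\<Sum>j<m. x j * symp n (a j) v)"
    unfolding symp_alt w_def by (simp add: sum_distrib_left)
  finally show ?thesis .
qed

lemma symp_lc_right: "symp n v (\<lambda>t. \<Sum>j<m. x j * a j t) = (\<Sum>j<m. x j * symp n v (a j))"
proof -
  have "symp n v (\<lambda>t. \<Sum>j<m. x j * a j t) = - symp n (\<lambda>t. \<Sum>j<m. x j * a j t) v"
    by (rule symp_antisym)
  also have "\<dots> = (\<Sum>j<m. x j * (- symp n (a j) v))"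
    unfolding symp_lc_left by (simp add: sum_negf[symmetric])
  also have "\<dots> = (\<Sum>j<m. x j * symp n v (a j))"
    using symp_antisym[of n v] by simp
  finally show ?thesis .
qed

lemma symp_add_left: "symp n (\<lambda>t. u t + w t) v = symp n u v + symp n w v"
  unfolding symp_def by (simp add: algebra_simps sum.distrib)

lemma symp_add_right: "symp n v (\<lambda>t. u t + w t) = symp n v u + symp n v w"
  unfolding symp_def by (simp add: algebra_simps sum.distrib)

lemma symp_diff_left: "symp n (\<lambda>t. u t - w t) v = symp n u v - symp n w v"
  unfolding symp_def by (simp add: algebra_simps sum_subtractf)

lemma symp_zero_left: "symp n (\<lambda>t. 0) v = 0"
  unfolding symp_def by simp

lemma symp_cong:
  assumes "\<forall>i<2*n. [u i = u' i] (mod d)" "\<forall>i<2*n. [v i = v' i] (mod d)"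
  shows "[symp n u v = symp n u' v'] (mod d)"
  unfolding symp_def using assms by (intro cong_sum cong_mult) auto

lemma Sp_entry: "mmul (2*n) (mtrans M) (mmul (2*n) (Lambda n) M) j l = symp n (\<lambda>i. M i j) (\<lambda>i. M i l)"
  unfolding mmul_def mtrans_def symp_def by (simp add: sum_distrib_left mult.assoc)

lemma SympDual:
  fixes d :: int
  assumes d: "d \<ge> 2" and ind: "lin_indep_mod d (2*n) r a" and r: "r \<le> 2*n"
  shows "\<exists>b. \<forall>k<r. \<forall>j<r. [symp n (b k) (a j) = mident k j] (mod d)"
proof -
  define a' where "a' j t = (if t < n then a j (t+n) else - a j (t-n))" for j t
  have ind': "lin_indep_mod d (2*n) r a'"
    unfolding lin_indep_mod_def
  proof (intro allI impI)
    fix x j assume h: "\<forall>t<2*n. [(\<Sum>j<r. x j * a' j t) = 0] (mod d)" and j: "j < r"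
    have "\<forall>s<2*n. [(\<Sum>j<r. x j * a j s) = 0] (mod d)"
    proof (intro allI impI)
      fix s assume s: "s < 2*n"
      show "[(\<Sum>j<r. x j * a j s) = 0] (mod d)"
      proof (cases "s < n")
        case True
        have "[(\<Sum>j<r. x j * a' j (s+n)) = 0] (mod d)" using h s True by simp
        moreover have "(\<Sum>j<r. x j * a' j (s+n)) = - (\<Sum>j<r. x j * a j s)"
          unfolding a'_def by (simp add: sum_negf[symmetric])
        ultimately have "[- (\<Sum>j<r. x j * a j s) = 0] (mod d)" by simp
        then show ?thesis by (simp add: cong_0_iff)
      next
        case False
        have "[(\<Sum>j<r. x j * a' j (s-n)) = 0] (mod d)" using h s False by simp
        moreover have "(\<Sum>j<r. x j * a' j (s-n)) = (\<Sum>j<r. x j * a j s)"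
          unfolding a'_def using False s by (intro sum.cong) auto
        ultimately show ?thesis by simp
      qed
    qed
    then show "[x j = 0] (mod d)" using indepD[OF ind] j by blast
  qed
  obtain U where U: "\<forall>k<r. \<forall>j<r. [(\<Sum>t<2*n. U k t * a' j t) = mident k j] (mod d)"
    using Dual[OF d ind' r] by blast
  have "symp n (U k) (a j) = (\<Sum>t<2*n. U k t * a' j t)" for k j
    unfolding symp_alt a'_def by simp
  then show ?thesis using U by (intro exI[of _ U]) simp
qed

lemma sum_mident: "i < n \<Longrightarrow> (\<Sum>l<n. f l * mident i l) = f i"
  unfolding mident_def by (simp add: if_distrib if_distribR cong: if_cong)

lemma Lagr:
  fixes d :: int
  assumes d: "d \<ge> 2" and ind: "lin_indep_mod d (2*n) n a"
    and iso: "\<forall>i<n. \<forall>j<n. [symp n (a i) (a j) = 0] (mod d)"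
  shows "\<exists>M. (\<forall>j<2*n. \<forall>l<2*n. [symp n (\<lambda>i. M i j) (\<lambda>i. M i l) = Lambda n j l] (mod d))
            \<and> (\<forall>j<n. \<forall>i. M i (n+j) = a j i)"
proof -
  obtain b where b: "\<forall>k<n. \<forall>j<n. [symp n (b k) (a j) = mident k j] (mod d)"
    using SympDual[OF d ind] by auto
  define tt where "tt i l = (if l < i then symp n (b i) (b l) else 0)" for i l
  define b' where "b' i = (\<lambda>t. b i t + (\<Sum>l<n. tt i l * a l t))" for i
  have ba: "[symp n (b' i) (a j) = mident i j] (mod d)" if i: "i < n" and j: "j < n" for i j
  proof -
    have "symp n (b' i) (a j) = symp n (b i) (a j) + (\<Sum>l<n. tt i l * symp n (a l) (a j))"
      unfolding b'_def symp_add_left symp_lc_left ..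
    also have "[\<dots> = mident i j + (\<Sum>l<n. tt i l * 0)] (mod d)"
      using b iso i j by (intro cong_add cong_sum cong_mult) auto
    finally show ?thesis by simp
  qed
  have bb: "[symp n (b' i) (b' k) = 0] (mod d)" if i: "i < n" and k: "k < n" for i k
  proof -
    have s1: "symp n (b' i) (b' k) = symp n (b i) (b' k) + symp n (\<lambda>t. \<Sum>l<n. tt i l * a l t) (b' k)"
      unfolding b'_def[of i] by (rule symp_add_left)
    have s2: "symp n (b i) (b' k) = symp n (b i) (b k) + (\<Sum>l<n. tt k l * symp n (b i) (a l))"
      unfolding b'_def[of k] symp_add_right symp_lc_right ..
    have s3: "symp n (\<lambda>t. \<Sum>l<n. tt i l * a l t) (b' k) = (\<Sum>l<n. tt i l * symp n (a l) (b' k))"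
      by (rule symp_lc_left)
    have e1: "[(\<Sum>l<n. tt k l * symp n (b i) (a l)) = tt k i] (mod d)"
    proof -
      have "[(\<Sum>l<n. tt k l * symp n (b i) (a l)) = (\<Sum>l<n. tt k l * mident i l)] (mod d)"
        using b i by (intro cong_sum cong_mult) auto
      then show ?thesis using i by (simp add: sum_mident)
    qed
    have e2: "[(\<Sum>l<n. tt i l * symp n (a l) (b' k)) = - tt i k] (mod d)"
    proof -
      have "[(\<Sum>l<n. tt i l * symp n (a l) (b' k)) = (\<Sum>l<n. tt i l * (- mident k l))] (mod d)"
      proof (intro cong_sum cong_mult)
        fix l assume "l \<in> {..<n}"
        then have "[symp n (b' k) (a l) = mident k l] (mod d)" using ba k by auto
        then have "[- symp n (b' k) (a l) = - mident k l] (mod d)" by (rule cong_minus_minus_iff[THEN iffD2])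
        then show "[symp n (a l) (b' k) = - mident k l] (mod d)" using symp_antisym[of n "a l" "b' k"] by simp
      qed auto
      also have "(\<Sum>l<n. tt i l * (- mident k l)) = - tt i k"
        using k by (simp add: sum_negf sum_mident)
      finally show ?thesis .
    qed
    have "[symp n (b' i) (b' k) = symp n (b i) (b k) + tt k i + - tt i k] (mod d)"
      unfolding s1 s2 s3 by (intro cong_add e1 e2 cong_refl)
    moreover have "symp n (b i) (b k) + tt k i + - tt i k = 0"
    proof (cases "i < k")
      case True then show ?thesis unfolding tt_def using symp_antisym[of n "b i" "b k"] by simp
    next
      case False then show ?thesis unfolding tt_def using symp_antisym[of n "b i" "b k"] symp_self[of n "b i"]
        by (cases "i = k") auto
    qed
    ultimately show ?thesis by simp
  qed
  define M where "M i j = (if j < n then b' j i else a (j - n) i)" for i j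
  have colL: "(\<lambda>i. M i j) = b' j" if "j < n" for j using that unfolding M_def by simp
  have colR: "(\<lambda>i. M i j) = a (j - n)" if "\<not> j < n" for j using that unfolding M_def by simp
  show ?thesis
  proof (intro exI[of _ M] conjI allI impI)
    fix j i assume "j < n" then show "M i (n + j) = a j i" unfolding M_def by simp
  next
    fix j l assume j: "j < 2*n" and l: "l < 2*n"
    show "[symp n (\<lambda>i. M i j) (\<lambda>i. M i l) = Lambda n j l] (mod d)"
    proof (cases "j < n")
      case jT: True
      show ?thesis
      proof (cases "l < n")
        case True
        then show ?thesis using bb[OF jT True] jT unfolding colL[OF jT] colL[OF True] Lambda_def by simp
      next
        case False
        have "Lambda n j l = mident j (l - n)" using jT False l unfolding Lambda_def mident_def by auto
        then show ?thesis using ba[OF jT, of "l - n"] False l unfolding colL[OF jT] colR[OF False] by simp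
      qed
    next
      case jF: False
      show ?thesis
      proof (cases "l < n")
        case True
        have "[symp n (b' l) (a (j - n)) = mident l (j - n)] (mod d)" using ba[OF True, of "j - n"] j jF by simp
        then have "[- symp n (b' l) (a (j - n)) = - mident l (j - n)] (mod d)"
          by (rule cong_minus_minus_iff[THEN iffD2])
        moreover have "Lambda n j l = - mident l (j - n)" using jF True j unfolding Lambda_def mident_def by auto
        ultimately show ?thesis unfolding colR[OF jF] colL[OF True]
          using symp_antisym[of n "a (j - n)" "b' l"] by simp
      next
        case False
        have "Lambda n j l = 0" using jF False unfolding Lambda_def by auto
        then show ?thesis using iso jF False j l unfolding colR[OF jF] colR[OF False] by simp
      qed
    qed
  qed
qed

lemma sum_mident': "k < n \<Longrightarrow> (\<Sum>l<n. f l * mident l k) = f k"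
  unfolding mident_def by (simp add: if_distrib if_distribR cong: if_cong)

lemma Tr_step:
  fixes d :: int
  assumes d: "d \<ge> 2" and rn: "r < n" and ind: "lin_indep_mod d (2*n) r a"
    and iso: "\<forall>i<r. \<forall>j<r. [symp n (a i) (a j) = 0] (mod d)"
  shows "\<exists>v. lin_indep_mod d (2*n) (Suc r) (a(r := v)) \<and>
             (\<forall>i<Suc r. \<forall>j<Suc r. [symp n ((a(r := v)) i) ((a(r := v)) j) = 0] (mod d))"
proof -
  obtain b where b: "\<forall>k<r. \<forall>j<r. [symp n (b k) (a j) = mident k j] (mod d)"
    using SympDual[OF d ind] rn by auto
  define c where "c j = (if j < r then a j else b (j - r))" for j
  have csplit: "(\<Sum>j<r+r. x j * c j t) = (\<Sum>j<r. x j * a j t) + (\<Sum>j<r. x (r+j) * b j t)" for x t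
    unfolding sum_split_add c_def by simp
  have indc: "lin_indep_mod d (2*n) (r+r) c"
    unfolding lin_indep_mod_def
  proof (intro allI impI)
    fix x j assume h: "\<forall>t<2*n. [(\<Sum>j<r+r. x j * c j t) = 0] (mod d)" and j: "j < r + r"
    define u where "u t = (\<Sum>j<r+r. x j * c j t)" for t
    have xb: "[x (r+k) = 0] (mod d)" if k: "k < r" for k
    proof -
      have "symp n u (a k) = (\<Sum>j<r+r. x j * symp n (c j) (a k))"
        unfolding u_def by (rule symp_lc_left)
      also have "\<dots> = (\<Sum>j<r. x j * symp n (a j) (a k)) + (\<Sum>j<r. x (r+j) * symp n (b j) (a k))"
        unfolding sum_split_add c_def by simp
      also have "[\<dots> = (\<Sum>j<r. x j * 0) + (\<Sum>j<r. x (r+j) * mident j k)] (mod d)"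
        using iso b k by (intro cong_add cong_sum cong_mult) auto
      also have "(\<Sum>j<r. x j * 0) + (\<Sum>j<r. x (r+j) * mident j k) = x (r+k)"
        using k by (simp add: sum_mident')
      finally have 1: "[symp n u (a k) = x (r+k)] (mod d)" .
      have "[symp n u (a k) = symp n (\<lambda>t. 0) (a k)] (mod d)"
        using h unfolding u_def by (intro symp_cong) auto
      then have "[symp n u (a k) = 0] (mod d)" by (simp add: symp_zero_left)
      then show ?thesis using 1 by (metis cong_sym cong_trans)
    qed
    have "\<forall>t<2*n. [(\<Sum>j<r. x j * a j t) = 0] (mod d)"
    proof (intro allI impI)
      fix t assume t: "t < 2*n"
      have "[(\<Sum>j<r. x (r+j) * b j t) = (\<Sum>j<r. 0 * b j t)] (mod d)"
        using xb by (intro cong_sum cong_mult) auto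
      then have "[(\<Sum>j<r. x j * a j t) + (\<Sum>j<r. x (r+j) * b j t) = (\<Sum>j<r. x j * a j t) + 0] (mod d)"
        by (intro cong_add) auto
      moreover have "[(\<Sum>j<r+r. x j * c j t) = 0] (mod d)" using h t by blast
      then have "[(\<Sum>j<r. x j * a j t) + (\<Sum>j<r. x (r+j) * b j t) = 0] (mod d)"
        by (simp only: csplit)
      ultimately have "[(\<Sum>j<r. x j * a j t) + 0 = 0] (mod d)"
        by (rule cong_trans[OF cong_sym])
      then show "[(\<Sum>j<r. x j * a j t) = 0] (mod d)" by simp
    qed
    then have xa: "[x j' = 0] (mod d)" if "j' < r" for j' using indepD[OF ind] that by blast
    show "[x j = 0] (mod d)"
    proof (cases "j < r")
      case True then show ?thesis using xa by blast
    next
      case False then have e: "r + (j - r) = j" and jr: "j - r < r" using j by auto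
      have "[x (r + (j - r)) = 0] (mod d)" by (rule xb[OF jr])
      then show ?thesis unfolding e .
    qed
  qed
  obtain w where w: "lin_indep_mod d (2*n) (Suc (r+r)) (c(r+r := w))"
    using ext_one[OF _ indc] d rn by auto
  define s where "s j = symp n w (a j)" for j
  define v where "v t = w t - (\<Sum>j<r. s j * b j t)" for t
  have sv: "[symp n v (a k) = 0] (mod d)" if k: "k < r" for k
  proof -
    have "symp n v (a k) = symp n w (a k) - (\<Sum>j<r. s j * symp n (b j) (a k))"
      unfolding v_def symp_diff_left symp_lc_left ..
    also have "[\<dots> = s k - (\<Sum>j<r. s j * mident j k)] (mod d)"
      using b k unfolding s_def by (intro cong_diff cong_sum cong_mult) auto
    also have "s k - (\<Sum>j<r. s j * mident j k) = 0" using k by (simp add: sum_mident')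
    finally show ?thesis .
  qed
  have ind2: "lin_indep_mod d (2*n) (Suc r) (a(r := v))"
    unfolding lin_indep_mod_def
  proof (intro allI impI)
    fix x j assume h: "\<forall>t<2*n. [(\<Sum>j<Suc r. x j * (a(r := v)) j t) = 0] (mod d)" and j: "j < Suc r"
    define z where "z j = (if j < r then x j else if j < r + r then - (x r * s (j - r)) else x r)" for j
    have eq: "(\<Sum>j<Suc (r+r). z j * (c(r+r := w)) j t) = (\<Sum>j<Suc r. x j * (a(r := v)) j t)" for t
    proof -
      have "(\<Sum>j<Suc (r+r). z j * (c(r+r := w)) j t) = (\<Sum>j<r+r. z j * c j t) + z (r+r) * w t"
        by simp
      also have "(\<Sum>j<r+r. z j * c j t) = (\<Sum>j<r. x j * a j t) + (\<Sum>j<r. - (x r * s j) * b j t)"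
        unfolding sum_split_add c_def z_def by simp
      also have "z (r+r) = x r" unfolding z_def by simp
      finally have 1: "(\<Sum>j<Suc (r+r). z j * (c(r+r := w)) j t)
          = (\<Sum>j<r. x j * a j t) + (\<Sum>j<r. - (x r * s j) * b j t) + x r * w t" .
      have 2: "(\<Sum>j<Suc r. x j * (a(r := v)) j t) = (\<Sum>j<r. x j * a j t) + x r * v t" by simp
      show ?thesis unfolding 1 2 v_def
        by (simp add: right_diff_distrib sum_distrib_left sum_negf mult.assoc)
    qed
    have zz: "[z j' = 0] (mod d)" if "j' < Suc (r+r)" for j'
      using indepD[OF w, of z] h that unfolding eq by blast
    show "[x j = 0] (mod d)"
    proof (cases "j < r")
      case True then show ?thesis using zz[of j] unfolding z_def by simp
    next
      case False then have "j = r" using j by simp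
      then show ?thesis using zz[of "r+r"] unfolding z_def by simp
    qed
  qed
  have iso2: "\<forall>i<Suc r. \<forall>j<Suc r. [symp n ((a(r := v)) i) ((a(r := v)) j) = 0] (mod d)"
  proof (intro allI impI)
    fix i j assume i: "i < Suc r" and j: "j < Suc r"
    show "[symp n ((a(r := v)) i) ((a(r := v)) j) = 0] (mod d)"
    proof (cases "i = r")
      case iT: True
      show ?thesis
      proof (cases "j = r")
        case True then show ?thesis using iT by (simp add: symp_self)
      next
        case False then show ?thesis using iT sv[of j] j by simp
      qed
    next
      case iF: False
      show ?thesis
      proof (cases "j = r")
        case True
        have "[symp n v (a i) = 0] (mod d)" using sv[of i] i iF by simp
        then have "[- symp n v (a i) = - 0] (mod d)" by (rule cong_minus_minus_iff[THEN iffD2])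
        then show ?thesis using True iF symp_antisym[of n "a i" v] by simp
      next
        case False then show ?thesis using iF iso i j by simp
      qed
    qed
  qed
  show ?thesis using ind2 iso2 by blast
qed

lemma Tr_aux:
  fixes d :: int
  assumes d: "d \<ge> 2"
  shows "n - r = k \<Longrightarrow> r \<le> n \<Longrightarrow> lin_indep_mod d (2*n) r a \<Longrightarrow>
    \<forall>i<r. \<forall>j<r. [symp n (a i) (a j) = 0] (mod d) \<Longrightarrow>
    \<exists>M. (\<forall>j<2*n. \<forall>l<2*n. [symp n (\<lambda>i. M i j) (\<lambda>i. M i l) = Lambda n j l] (mod d))
            \<and> (\<forall>j<r. \<forall>i. M i (n+j) = a j i)"
proof (induction k arbitrary: r a)
  case 0
  then have "r = n" by simp
  then show ?case using Lagr[OF d] 0 by blast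
next
  case (Suc k)
  then have rn: "r < n" by simp
  obtain v where v: "lin_indep_mod d (2*n) (Suc r) (a(r := v))"
    "\<forall>i<Suc r. \<forall>j<Suc r. [symp n ((a(r := v)) i) ((a(r := v)) j) = 0] (mod d)"
    using Tr_step[OF d rn Suc.prems(3,4)] by blast
  have "n - Suc r = k" "Suc r \<le> n" using Suc.prems rn by auto
  then obtain M where M: "\<forall>j<2*n. \<forall>l<2*n. [symp n (\<lambda>i. M i j) (\<lambda>i. M i l) = Lambda n j l] (mod d)"
    "\<forall>j<Suc r. \<forall>i. M i (n+j) = (a(r := v)) j i"
    using Suc.IH[OF _ _ v] by blast
  show ?case using M by (intro exI[of _ M]) auto
qed

lemma Tr:
  fixes d :: int
  assumes "d \<ge> 2" "r \<le> n" "lin_indep_mod d (2*n) r a"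
    "\<forall>i<r. \<forall>j<r. [symp n (a i) (a j) = 0] (mod d)"
  shows "\<exists>M. (\<forall>j<2*n. \<forall>l<2*n. [symp n (\<lambda>i. M i j) (\<lambda>i. M i l) = Lambda n j l] (mod d))
            \<and> (\<forall>j<r. \<forall>i. M i (n+j) = a j i)"
  using Tr_aux[OF assms(1) refl assms(2-4)] .

lemma span_cong:
  assumes "\<forall>j<m. \<forall>i<N. [a j i = a' j i] (mod d)"
  shows "span_mod d N m a = span_mod d N m a'"
proof -
  have *: "[(\<Sum>j<m. x j * a j i) = (\<Sum>j<m. x j * a' j i)] (mod d)" if "i < N" for x i
    using assms that by (intro cong_sum cong_mult) auto
  show ?thesis
  proof (intro set_eqI iffI)
    fix v assume "v \<in> span_mod d N m a"
    then obtain x where v: "v \<in> vecs d N" and x: "\<forall>i<N. [v i = (\<Sum>j<m. x j * a j i)] (mod d)"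
      unfolding span_mod_def by blast
    have "\<forall>i<N. [v i = (\<Sum>j<m. x j * a' j i)] (mod d)"
      using x \<open>\<And>x i. i < N \<Longrightarrow> [(\<Sum>j<m. x j * a j i) = (\<Sum>j<m. x j * a' j i)] (mod d)\<close>
      by (meson cong_trans)
    then show "v \<in> span_mod d N m a'" using v unfolding span_mod_def by blast
  next
    fix v assume "v \<in> span_mod d N m a'"
    then obtain x where v: "v \<in> vecs d N" and x: "\<forall>i<N. [v i = (\<Sum>j<m. x j * a' j i)] (mod d)"
      unfolding span_mod_def by blast
    have "\<forall>i<N. [v i = (\<Sum>j<m. x j * a j i)] (mod d)"
      using x \<open>\<And>x i. i < N \<Longrightarrow> [(\<Sum>j<m. x j * a j i) = (\<Sum>j<m. x j * a' j i)] (mod d)\<close>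
      by (meson cong_trans cong_sym)
    then show "v \<in> span_mod d N m a" using v unfolding span_mod_def by blast
  qed
qed

lemma span_sub:
  assumes "\<forall>j<m. \<exists>y. \<forall>i<N. [a j i = (\<Sum>l<m'. y l * b l i)] (mod d)"
  shows "span_mod d N m a \<subseteq> span_mod d N m' b"
proof
  fix v assume "v \<in> span_mod d N m a"
  then obtain x where v: "v \<in> vecs d N" and x: "\<forall>i<N. [v i = (\<Sum>j<m. x j * a j i)] (mod d)"
    unfolding span_mod_def by blast
  from assms obtain Y where Y: "\<And>j i. j < m \<Longrightarrow> i < N \<Longrightarrow> [a j i = (\<Sum>l<m'. Y j l * b l i)] (mod d)"
    by (metis choice)
  have "\<forall>i<N. [v i = (\<Sum>l<m'. (\<Sum>j<m. x j * Y j l) * b l i)] (mod d)"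
  proof (intro allI impI)
    fix i assume i: "i < N"
    have "[v i = (\<Sum>j<m. x j * a j i)] (mod d)" using x i by blast
    also have "[(\<Sum>j<m. x j * a j i) = (\<Sum>j<m. x j * (\<Sum>l<m'. Y j l * b l i))] (mod d)"
      using Y i by (intro cong_sum cong_mult) auto
    also have "(\<Sum>j<m. x j * (\<Sum>l<m'. Y j l * b l i)) = (\<Sum>j<m. \<Sum>l<m'. x j * Y j l * b l i)"
      by (simp add: sum_distrib_left mult.assoc)
    also have "\<dots> = (\<Sum>l<m'. \<Sum>j<m. x j * Y j l * b l i)" by (rule sum.swap)
    also have "\<dots> = (\<Sum>l<m'. (\<Sum>j<m. x j * Y j l) * b l i)" by (simp add: sum_distrib_right)
    finally show "[v i = (\<Sum>l<m'. (\<Sum>j<m. x j * Y j l) * b l i)] (mod d)" .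
  qed
  then show "v \<in> span_mod d N m' b" using v unfolding span_mod_def
    by (intro CollectI conjI exI[of _ "\<lambda>l. \<Sum>j<m. x j * Y j l"])
qed

lemma span_in:
  assumes sub: "span_mod d N m a \<subseteq> span_mod d N m' b" and j: "j < m" and d: "d > 0"
  shows "\<exists>y. \<forall>i<N. [a j i = (\<Sum>l<m'. y l * b l i)] (mod d)"
proof -
  define v where "v i = (if i < N then a j i mod d else 0)" for i
  have "v \<in> vecs d N" using d unfolding v_def vecs_def by auto
  moreover have "\<forall>i<N. [v i = (\<Sum>l<m. mident l j * a l i)] (mod d)"
  proof (intro allI impI)
    fix i assume "i < N"
    have "(\<Sum>l<m. mident l j * a l i) = a j i" using sum_mident'[of j m "\<lambda>l. a l i"] j
      by (simp add: mult.commute)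
    then show "[v i = (\<Sum>l<m. mident l j * a l i)] (mod d)" using \<open>i < N\<close> unfolding v_def
      by (simp add: cong_def)
  qed
  ultimately have "v \<in> span_mod d N m a" unfolding span_mod_def
    by (intro CollectI conjI exI[of _ "\<lambda>l. mident l j"])
  then have "v \<in> span_mod d N m' b" using sub by blast
  then obtain y where y: "\<forall>i<N. [v i = (\<Sum>l<m'. y l * b l i)] (mod d)" unfolding span_mod_def by blast
  have "\<forall>i<N. [a j i = (\<Sum>l<m'. y l * b l i)] (mod d)"
  proof (intro allI impI)
    fix i assume i: "i < N"
    have "[a j i = v i] (mod d)" using i unfolding v_def by (simp add: cong_def)
    then show "[a j i = (\<Sum>l<m'. y l * b l i)] (mod d)" using y i cong_trans by blast
  qed
  then show ?thesis by (rule exI[of _ y])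
qed

lemma span_transform:
  assumes sub: "span_mod d N m a \<subseteq> span_mod d N m' b" and d: "d > 0"
  shows "span_mod d N m (\<lambda>j i. \<Sum>t<N. G i t * a j t) \<subseteq> span_mod d N m' (\<lambda>j i. \<Sum>t<N. G i t * b j t)"
proof (rule span_sub, intro allI impI)
  fix j assume j: "j < m"
  obtain y where y: "\<forall>i<N. [a j i = (\<Sum>l<m'. y l * b l i)] (mod d)" using span_in[OF sub j d] by blast
  have "\<forall>i<N. [(\<Sum>t<N. G i t * a j t) = (\<Sum>l<m'. y l * (\<Sum>t<N. G i t * b l t))] (mod d)"
  proof (intro allI impI)
    fix i assume i: "i < N"
    have "[(\<Sum>t<N. G i t * a j t) = (\<Sum>t<N. G i t * (\<Sum>l<m'. y l * b l t))] (mod d)"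
      using y by (intro cong_sum cong_mult) auto
    also have "(\<Sum>t<N. G i t * (\<Sum>l<m'. y l * b l t)) = (\<Sum>t<N. \<Sum>l<m'. y l * (G i t * b l t))"
      by (simp add: sum_distrib_left algebra_simps)
    also have "\<dots> = (\<Sum>l<m'. \<Sum>t<N. y l * (G i t * b l t))" by (rule sum.swap)
    also have "\<dots> = (\<Sum>l<m'. y l * (\<Sum>t<N. G i t * b l t))" by (simp add: sum_distrib_left)
    finally show "[(\<Sum>t<N. G i t * a j t) = (\<Sum>l<m'. y l * (\<Sum>t<N. G i t * b l t))] (mod d)" .
  qed
  then show "\<exists>y. \<forall>i<N. [(\<Sum>t<N. G i t * a j t) = (\<Sum>l<m'. y l * (\<Sum>t<N. G i t * b l t))] (mod d)"
    by (rule exI[of _ y])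
qed

lemma span_subset_vecs: "span_mod d N m a \<subseteq> vecs d N"
  unfolding span_mod_def by blast

lemma mtrans_mmul: "mtrans (mmul m A B) = mmul m (mtrans B) (mtrans A)"
  unfolding mtrans_def mmul_def by (simp add: mult.commute)

lemma meq_mod_mtrans: "meq_mod d m A B \<Longrightarrow> meq_mod d m (mtrans A) (mtrans B)"
  unfolding meq_mod_def mtrans_def by auto

lemma meq_mod_mmul: "meq_mod d m A A' \<Longrightarrow> meq_mod d m B B' \<Longrightarrow> meq_mod d m (mmul m A B) (mmul m A' B')"
  using meq_mod_mmul_left meq_mod_mmul_right meq_mod_trans by blast

lemma mtrans_ident: "mtrans mident = mident"
  unfolding mtrans_def mident_def by (auto intro!: ext)

lemma Lam_antisym: "Lambda n l i = - Lambda n i l"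
  unfolding Lambda_def by auto

lemma LamT_Lam:
  assumes "i < 2*n" "j < 2*n"
  shows "mmul (2*n) (mtrans (Lambda n)) (Lambda n) i j = mident i j"
proof -
  have "mmul (2*n) (mtrans (Lambda n)) (Lambda n) i j = - (\<Sum>l<2*n. Lambda n i l * Lambda n l j)"
    unfolding mmul_def mtrans_def by (simp add: Lam_antisym[of n _ i] sum_negf)
  also have "\<dots> = - (if i < n then Lambda n (i+n) j else - Lambda n (i-n) j)"
    using assms by (simp add: Lam_apply)
  also have "\<dots> = mident i j" using assms unfolding Lambda_def mident_def by auto
  finally show ?thesis .
qed

lemma meq_mod_LamT_Lam: "meq_mod d (2*n) (mmul (2*n) (mtrans (Lambda n)) (Lambda n)) mident"
  unfolding meq_mod_def by (simp add: LamT_Lam)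

lemma leftinv_injm:
  assumes "meq_mod d N (mmul N L M) mident"
  shows "injm d N M"
  unfolding injm_def
proof (intro allI impI)
  fix x j assume h: "\<forall>i<N. [(\<Sum>l<N. M i l * x l) = 0] (mod d)" and j: "j < N"
  have "x j = (\<Sum>l<N. mident j l * x l)" using j unfolding mident_def
    by (simp add: if_distrib if_distribR cong: if_cong)
  also have "[\<dots> = (\<Sum>l<N. mmul N L M j l * x l)] (mod d)"
    using assms j unfolding meq_mod_def by (intro cong_sum cong_mult) (auto simp: cong_sym)
  also have "(\<Sum>l<N. mmul N L M j l * x l) = (\<Sum>i<N. L j i * (\<Sum>l<N. M i l * x l))"
  proof -
    have "(\<Sum>l<N. mmul N L M j l * x l) = (\<Sum>l<N. \<Sum>i<N. L j i * (M i l * x l))"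
      unfolding mmul_def by (simp add: sum_distrib_right mult.assoc)
    also have "\<dots> = (\<Sum>i<N. \<Sum>l<N. L j i * (M i l * x l))" by (rule sum.swap)
    also have "\<dots> = (\<Sum>i<N. L j i * (\<Sum>l<N. M i l * x l))" by (simp add: sum_distrib_left)
    finally show ?thesis .
  qed
  also have "[\<dots> = (\<Sum>i<N. L j i * 0)] (mod d)"
    using h by (intro cong_sum cong_mult) auto
  finally show "[x j = 0] (mod d)" by simp
qed

lemma two_sided:
  assumes d: "d \<ge> 2" and AB: "meq_mod d m (mmul m A B) mident"
  shows "meq_mod d m (mmul m B A) mident"
proof -
  have "injm d m B" by (rule leftinv_injm[OF AB])
  then obtain U where BU: "meq_mod d m (mmul m B U) mident" and UB: "meq_mod d m (mmul m U B) mident"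
    using INV[OF d] by blast
  have "meq_mod d m A (mmul m A (mmul m B U))"
    using meq_mod_mmul_right[OF BU, of A] meq_mod_ident_right meq_mod_sym meq_mod_trans by blast
  also have "mmul m A (mmul m B U) = mmul m (mmul m A B) U" by (simp add: mmul_assoc)
  finally have "meq_mod d m A (mmul m (mmul m A B) U)" .
  moreover have "meq_mod d m (mmul m (mmul m A B) U) U"
    using meq_mod_mmul_left[OF AB, of U] meq_mod_ident_left meq_mod_trans by blast
  ultimately have AU: "meq_mod d m A U" using meq_mod_trans by blast
  have "meq_mod d m (mmul m B A) (mmul m B U)" by (rule meq_mod_mmul_right[OF AU])
  then show ?thesis using BU meq_mod_trans by blast
qed

definition red :: "int \<Rightarrow> nat \<Rightarrow> (nat \<Rightarrow> nat \<Rightarrow> int) \<Rightarrow> nat \<Rightarrow> nat \<Rightarrow> int" where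
  "red d N A = (\<lambda>i j. if i < N \<and> j < N then A i j mod d else 0)"

definition SpC :: "int \<Rightarrow> nat \<Rightarrow> (nat \<Rightarrow> nat \<Rightarrow> int) \<Rightarrow> bool" where
  "SpC d n M = meq_mod d (2*n) (mmul (2*n) (mtrans M) (mmul (2*n) (Lambda n) M)) (Lambda n)"

definition Phi :: "int \<Rightarrow> nat \<Rightarrow> nat \<Rightarrow> (nat \<Rightarrow> nat \<Rightarrow> int) \<Rightarrow> (nat \<Rightarrow> int) set" where
  "Phi d n r M = span_mod d (2*n) r (\<lambda>j i. M i (n+j))"

lemma red_mats: "d > 0 \<Longrightarrow> red d N A \<in> mats d N"
  unfolding red_def mats_def by auto

lemma red_meq: "meq_mod d N (red d N A) A"
  unfolding red_def meq_mod_def by (simp add: cong_def)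

lemma meq_eq_mats:
  assumes "A \<in> mats d N" "B \<in> mats d N" "meq_mod d N A B"
  shows "A = B"
proof (intro ext)
  fix i j show "A i j = B i j"
  proof (cases "i < N \<and> j < N")
    case True then show ?thesis using assms unfolding mats_def meq_mod_def
      by (intro cong_range_eq) auto
  next
    case False then show ?thesis using assms unfolding mats_def by auto
  qed
qed

lemma SpC_cong:
  assumes "meq_mod d (2*n) A B" "SpC d n B"
  shows "SpC d n A"
proof -
  have "meq_mod d (2*n) (mmul (2*n) (mtrans A) (mmul (2*n) (Lambda n) A))
                        (mmul (2*n) (mtrans B) (mmul (2*n) (Lambda n) B))"
    using assms(1) by (intro meq_mod_mmul meq_mod_mtrans meq_mod_refl)
  then show ?thesis unfolding SpC_def by (rule meq_mod_trans) (use assms(2) in \<open>simp add: SpC_def\<close>)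
qed

lemma Sp_iff: "M \<in> Sp d n \<longleftrightarrow> M \<in> mats d (2*n) \<and> SpC d n M"
  unfolding Sp_def SpC_def by simp

lemma Sp_red: "d > 0 \<Longrightarrow> SpC d n A \<Longrightarrow> red d (2*n) A \<in> Sp d n"
  unfolding Sp_iff by (intro conjI red_mats SpC_cong[OF red_meq]) auto

lemma SpC_mul:
  assumes A: "SpC d n A" and B: "SpC d n B"
  shows "SpC d n (mmul (2*n) A B)"
proof -
  let ?N = "2*n"
  have eq: "mmul ?N (mtrans (mmul ?N A B)) (mmul ?N (Lambda n) (mmul ?N A B))
      = mmul ?N (mtrans B) (mmul ?N (mmul ?N (mtrans A) (mmul ?N (Lambda n) A)) B)"
    by (simp add: mtrans_mmul mmul_assoc)
  have "meq_mod d ?N (mmul ?N (mtrans B) (mmul ?N (mmul ?N (mtrans A) (mmul ?N (Lambda n) A)) B))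
                     (mmul ?N (mtrans B) (mmul ?N (Lambda n) B))"
    using A unfolding SpC_def by (intro meq_mod_mmul meq_mod_refl)
  then show ?thesis unfolding SpC_def eq by (rule meq_mod_trans) (use B in \<open>simp add: SpC_def\<close>)
qed

lemma Sp_inv:
  assumes d: "d \<ge> 2" and M: "SpC d n M"
  shows "\<exists>U. meq_mod d (2*n) (mmul (2*n) M U) mident \<and> meq_mod d (2*n) (mmul (2*n) U M) mident \<and> SpC d n U"
proof -
  let ?N = "2*n"
  define L where "L = mmul ?N (mtrans (Lambda n)) (mmul ?N (mtrans M) (Lambda n))"
  have "mmul ?N L M = mmul ?N (mtrans (Lambda n)) (mmul ?N (mtrans M) (mmul ?N (Lambda n) M))"
    unfolding L_def by (simp add: mmul_assoc)
  moreover have "meq_mod d ?N (mmul ?N (mtrans (Lambda n)) (mmul ?N (mtrans M) (mmul ?N (Lambda n) M)))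
     (mmul ?N (mtrans (Lambda n)) (Lambda n))"
    using M unfolding SpC_def by (intro meq_mod_mmul meq_mod_refl)
  ultimately have "meq_mod d ?N (mmul ?N L M) mident"
    using meq_mod_trans[OF _ meq_mod_LamT_Lam] by simp
  then have "injm d ?N M" by (rule leftinv_injm)
  then obtain U where MU: "meq_mod d ?N (mmul ?N M U) mident" and UM: "meq_mod d ?N (mmul ?N U M) mident"
    using INV[OF d] by blast
  have 1: "meq_mod d ?N (mmul ?N (mtrans U) (mmul ?N (Lambda n) U))
     (mmul ?N (mtrans U) (mmul ?N (mmul ?N (mtrans M) (mmul ?N (Lambda n) M)) U))"
    by (rule meq_mod_mmul[OF meq_mod_refl], rule meq_mod_mmul[OF _ meq_mod_refl], rule meq_mod_sym, rule M[unfolded SpC_def])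
  have 2: "mmul ?N (mtrans U) (mmul ?N (mmul ?N (mtrans M) (mmul ?N (Lambda n) M)) U)
     = mmul ?N (mtrans (mmul ?N M U)) (mmul ?N (Lambda n) (mmul ?N M U))"
    by (simp add: mtrans_mmul mmul_assoc)
  have 3: "meq_mod d ?N (mmul ?N (mtrans (mmul ?N M U)) (mmul ?N (Lambda n) (mmul ?N M U)))
     (mmul ?N (mtrans mident) (mmul ?N (Lambda n) mident))"
    using MU by (intro meq_mod_mmul meq_mod_mtrans meq_mod_refl)
  have 4: "meq_mod d ?N (mmul ?N (mtrans mident) (mmul ?N (Lambda n) mident)) (Lambda n)"
  proof -
    have "meq_mod d ?N (mmul ?N mident (mmul ?N (Lambda n) mident)) (mmul ?N (Lambda n) mident)"
      by (rule meq_mod_ident_left)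
    then show ?thesis unfolding mtrans_ident by (rule meq_mod_trans) (rule meq_mod_ident_right)
  qed
  have "SpC d n U" unfolding SpC_def
    by (rule meq_mod_trans[OF 1]) (unfold 2, rule meq_mod_trans[OF 3 4])
  then show ?thesis using MU UM by blast
qed

lemma Phi_red:
  assumes "r \<le> n"
  shows "Phi d n r (red d (2*n) A) = Phi d n r A"
  unfolding Phi_def using assms by (intro span_cong) (auto simp: red_def cong_def)

lemma Phi_cong:
  assumes "r \<le> n" "meq_mod d (2*n) A B"
  shows "Phi d n r A = Phi d n r B"
  unfolding Phi_def using assms by (intro span_cong) (auto simp: meq_mod_def)

lemma Phi_mul: "Phi d n r (mmul (2*n) G X) = span_mod d (2*n) r (\<lambda>j i. \<Sum>t<2*n. G i t * (\<lambda>j t. X t (n+j)) j t)"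
  unfolding Phi_def mmul_def by simp

lemma Phi_transform:
  assumes "Phi d n r X \<subseteq> Phi d n r Y" "d > 0"
  shows "Phi d n r (mmul (2*n) G X) \<subseteq> Phi d n r (mmul (2*n) G Y)"
  unfolding Phi_mul using span_transform[OF assms(1)[unfolded Phi_def] assms(2)] by simp

lemma Phi_ident: "Phi d n r mident = span_mod d (2*n) r (\<lambda>j. unitv (n+j))"
proof -
  have "(\<lambda>j i. mident i (n+j)) = (\<lambda>j. unitv (n+j))"
    unfolding mident_def unitv_def by (auto intro!: ext)
  then show ?thesis unfolding Phi_def by simp
qed

lemma sum_if_lt:
  fixes r n :: nat
  assumes "r \<le> n"
  shows "(\<Sum>i<n. (if i < r then h i else 0)) = (\<Sum>i<r. (h i :: int))"
proof -
  have "(\<Sum>i<n. (if i < r then h i else 0)) = (\<Sum>i<r. (if i < r then h i else 0))"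
    using assms by (intro sum.mono_neutral_right) auto
  then show ?thesis by simp
qed

lemma sum_unitv:
  "(\<Sum>l<r. f l * unitv (n+l) i) = (if n \<le> i \<and> i < n + r then f (i - n) else (0::int))"
proof (cases "n \<le> i \<and> i < n + r")
  case True
  have "\<And>l. f l * unitv (n+l) i = (if l = i - n then f l else 0)"
    using True unfolding unitv_def by auto
  then have "(\<Sum>l<r. f l * unitv (n+l) i) = (\<Sum>l<r. if l = i - n then f l else 0)" by simp
  also have "\<dots> = f (i - n)" using True by (simp add: sum.delta' less_diff_conv2 add.commute)
  finally show ?thesis using True by simp
next
  case False
  have "\<And>l. l \<in> {..<r} \<Longrightarrow> f l * unitv (n+l) i = 0"
    using False unfolding unitv_def by auto
  then have "(\<Sum>l<r. f l * unitv (n+l) i) = 0" by (rule sum.neutral[rule_format]) 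
  then show ?thesis using False by auto
qed

lemma kill_lemma:
  assumes AB: "meq_mod d r (mmul r A B) mident"
    and u: "\<forall>l<r. [(\<Sum>i<r. u i * A i l) = 0] (mod d)" and i': "i' < r"
  shows "[u i' = 0] (mod d)"
proof -
  have "u i' = (\<Sum>i<r. u i * mident i i')"
    using sum_mident'[OF i', of u] by simp
  also have "[\<dots> = (\<Sum>i<r. u i * mmul r A B i i')] (mod d)"
    using AB i' unfolding meq_mod_def by (intro cong_sum cong_mult) (auto simp: cong_sym)
  also have "(\<Sum>i<r. u i * mmul r A B i i') = (\<Sum>l<r. (\<Sum>i<r. u i * A i l) * B l i')"
  proof -
    have "(\<Sum>i<r. u i * mmul r A B i i') = (\<Sum>i<r. \<Sum>l<r. u i * A i l * B l i')"
      unfolding mmul_def by (simp add: sum_distrib_left mult.assoc)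
    also have "\<dots> = (\<Sum>l<r. \<Sum>i<r. u i * A i l * B l i')" by (rule sum.swap)
    also have "\<dots> = (\<Sum>l<r. (\<Sum>i<r. u i * A i l) * B l i')" by (simp add: sum_distrib_right)
    finally show ?thesis .
  qed
  also have "[\<dots> = (\<Sum>l<r. 0 * B l i')] (mod d)"
    using u by (intro cong_sum cong_mult) auto
  finally show ?thesis by simp
qed

lemma Phi_codes:
  assumes d: "d \<ge> 2" and k: "k < n" and M: "M \<in> Sp d n"
  shows "Phi d n (n-k) M \<in> stab_codes n k d"
proof -
  define r where "r = n - k"
  define a where "a j i = M i (n+j)" for j i
  have Mm: "M \<in> mats d (2*n)" and MS: "SpC d n M" using M unfolding Sp_iff by auto
  have va: "\<forall>j<r. a j \<in> vecs d (2*n)"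
    using Mm unfolding a_def mats_def vecs_def r_def by auto
  obtain U where UM: "meq_mod d (2*n) (mmul (2*n) U M) mident" using Sp_inv[OF d MS] by blast
  have inj: "injm d (2*n) M" by (rule leftinv_injm[OF UM])
  have ind: "lin_indep_mod d (2*n) r a"
    unfolding lin_indep_mod_def
  proof (intro allI impI)
    fix x j assume h: "\<forall>i<2*n. [(\<Sum>j<r. x j * a j i) = 0] (mod d)" and j: "j < r"
    define x' where "x' l = (if n \<le> l \<and> l < n + r then x (l - n) else 0)" for l
    have "(\<Sum>l<2*n. M i l * x' l) = (\<Sum>j<r. x j * a j i)" for i
    proof -
      have "(\<Sum>l<2*n. M i l * x' l) = (\<Sum>l<n. M i l * x' l) + (\<Sum>l<n. M i (n+l) * x' (n+l))"
        by (simp add: mult_2 sum_split_add)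
      also have "(\<Sum>l<n. M i l * x' l) = 0" unfolding x'_def by simp
      also have "(\<Sum>l<n. M i (n+l) * x' (n+l)) = (\<Sum>l<n. (if l < r then x l * a l i else 0))"
        unfolding x'_def a_def by (intro sum.cong) auto
      also have "\<dots> = (\<Sum>j<r. x j * a j i)" by (rule sum_if_lt) (simp add: r_def)
      finally show ?thesis by simp
    qed
    then have "\<forall>i<2*n. [(\<Sum>l<2*n. M i l * x' l) = 0] (mod d)" using h by simp
    then have "[x' (n+j) = 0] (mod d)" using injmD[OF inj] j r_def by auto
    then show "[x j = 0] (mod d)" unfolding x'_def using j by simp
  qed
  have iso: "\<forall>i<r. \<forall>j<r. [symp n (a i) (a j) = 0] (mod d)"
  proof (intro allI impI)
    fix i j assume i: "i < r" and j: "j < r"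
    have "[mmul (2*n) (mtrans M) (mmul (2*n) (Lambda n) M) (n+i) (n+j) = Lambda n (n+i) (n+j)] (mod d)"
      using MS i j unfolding SpC_def meq_mod_def r_def by auto
    moreover have "Lambda n (n+i) (n+j) = 0" unfolding Lambda_def by simp
    ultimately show "[symp n (a i) (a j) = 0] (mod d)" unfolding Sp_entry a_def by simp
  qed
  have "Phi d n (n-k) M = span_mod d (2*n) (n-k) a" unfolding Phi_def a_def ..
  then show ?thesis unfolding stab_codes_def using va ind iso r_def by blast
qed

abbreviation C0 :: "int \<Rightarrow> nat \<Rightarrow> nat \<Rightarrow> (nat \<Rightarrow> int) set" where
  "C0 d n r \<equiv> span_mod d (2*n) r (\<lambda>j. unitv (n+j))"

lemma TC1:
  assumes d: "d \<ge> 2" and k: "k < n" and X: "X \<in> T_set n k d"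
  shows "Phi d n (n-k) X = C0 d n (n-k)"
proof -
  define r where "r = n - k"
  have rn: "r \<le> n" unfolding r_def by simp
  have c2: "\<forall>i<2*n. \<forall>j. n \<le> j \<and> j < n + r \<and> \<not> (n \<le> i \<and> i < n + r) \<longrightarrow> X i j = 0"
    using X unfolding T_set_def r_def by blast
  obtain A where A: "A \<in> gl_mod d r" and c3: "\<forall>i<r. \<forall>j<r. X (n+i) (n+j) = A i j"
    using X unfolding T_set_def r_def by blast
  obtain B where AB: "meq_mod d r (mmul r A B) mident" using A unfolding gl_mod_def by blast
  have colX: "X i (n+j) = (if n \<le> i \<and> i < n + r then A (i - n) j else 0)" if "i < 2*n" "j < r" for i j
  proof (cases "n \<le> i \<and> i < n + r")
    case True
    have "i - n < r" using True by linarith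
    then have "X (n + (i - n)) (n+j) = A (i - n) j" using c3 that by blast
    moreover have "n + (i - n) = i" using True by simp
    ultimately show ?thesis using True by simp
  next
    case False then show ?thesis using c2 that by auto
  qed
  have "Phi d n r X \<subseteq> C0 d n r"
    unfolding Phi_def
  proof (rule span_sub, intro allI impI)
    fix j assume j: "j < r"
    have "\<forall>i<2*n. [X i (n+j) = (\<Sum>l<r. A l j * unitv (n+l) i)] (mod d)"
      using colX j by (simp add: sum_unitv)
    then show "\<exists>y. \<forall>i<2*n. [X i (n+j) = (\<Sum>l<r. y l * unitv (n+l) i)] (mod d)"
      by (rule exI[of _ "\<lambda>l. A l j"])
  qed
  moreover have "C0 d n r \<subseteq> Phi d n r X"
    unfolding Phi_def
  proof (rule span_sub, intro allI impI)
    fix j assume j: "j < r"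
    have "\<forall>i<2*n. [unitv (n+j) i = (\<Sum>l<r. B l j * X i (n+l))] (mod d)"
    proof (intro allI impI)
      fix i assume i: "i < 2*n"
      show "[unitv (n+j) i = (\<Sum>l<r. B l j * X i (n+l))] (mod d)"
      proof (cases "n \<le> i \<and> i < n + r")
        case True
        have "(\<Sum>l<r. B l j * X i (n+l)) = mmul r A B (i - n) j"
          unfolding mmul_def using colX i True by (intro sum.cong) auto
        moreover have "[mmul r A B (i - n) j = mident (i - n) j] (mod d)"
          using AB True j unfolding meq_mod_def by auto
        moreover have "mident (i - n) j = unitv (n+j) i"
          using True unfolding mident_def unitv_def by auto
        ultimately show ?thesis by (simp add: cong_sym)
      next
        case False
        have "\<And>l. l \<in> {..<r} \<Longrightarrow> B l j * X i (n+l) = 0" using colX i False by auto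
        then have "(\<Sum>l<r. B l j * X i (n+l)) = 0" by (rule sum.neutral[rule_format])
        moreover have "unitv (n+j) i = 0" using False j unfolding unitv_def by auto
        ultimately show ?thesis by simp
      qed
    qed
    then show "\<exists>y. \<forall>i<2*n. [unitv (n+j) i = (\<Sum>l<r. y l * X i (n+l))] (mod d)"
      by (rule exI[of _ "\<lambda>l. B l j"])
  qed
  ultimately show ?thesis unfolding r_def by blast
qed


lemma TC2:
  assumes d: "d \<ge> 2" and k: "k < n" and X: "X \<in> Sp d n"
    and ph: "Phi d n (n-k) X = C0 d n (n-k)"
  shows "X \<in> T_set n k d"
proof -
  define r where "r = n - k"
  have rn: "r \<le> n" unfolding r_def by simp
  have d0: "d > 0" using d by simp
  have Xm: "X \<in> mats d (2*n)" and XS: "SpC d n X" using X unfolding Sp_iff by auto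
  have Xr: "X i j \<in> {0..<d}" if "i < 2*n" "j < 2*n" for i j using Xm that unfolding mats_def by auto
  have sub1: "span_mod d (2*n) r (\<lambda>j i. X i (n+j)) \<subseteq> C0 d n r" using ph unfolding Phi_def r_def by simp
  have sub2: "C0 d n r \<subseteq> span_mod d (2*n) r (\<lambda>j i. X i (n+j))" using ph unfolding Phi_def r_def by simp
  have c2: "\<forall>i<2*n. \<forall>j. n \<le> j \<and> j < n + r \<and> \<not> (n \<le> i \<and> i < n + r) \<longrightarrow> X i j = 0"
  proof (intro allI impI)
    fix i j assume i: "i < 2*n" and h: "n \<le> j \<and> j < n + r \<and> \<not> (n \<le> i \<and> i < n + r)"
    define j' where "j' = j - n"
    have j': "j' < r" "j = n + j'" using h unfolding j'_def by auto
    obtain y where y: "\<forall>i<2*n. [X i (n+j') = (\<Sum>l<r. y l * unitv (n+l) i)] (mod d)"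
      using span_in[OF sub1 j'(1) d0] by blast
    have "[X i (n+j') = (if n \<le> i \<and> i < n + r then y (i - n) else 0)] (mod d)"
      using y i by (simp add: sum_unitv)
    then have "[X i j = 0] (mod d)" using h j' by simp
    then show "X i j = 0" using Xr[of i j] i h rn by (intro cong_range_eq) auto
  qed
  have colX1: "X i (n+l) = 0" if "i < n" "l < r" for i l
    using c2 that rn by auto
  have colX2: "X (n+i) (n+l) = 0" if "i < n" "l < r" "\<not> i < r" for i l
    using c2 that by auto
  define A where "A i j = (if i < r \<and> j < r then X (n+i) (n+j) else 0)" for i j
  have Am: "A \<in> mats d r" unfolding mats_def A_def using Xr rn d0 by auto
  have "\<forall>j. \<exists>y. j < r \<longrightarrow> (\<forall>i<2*n. [unitv (n+j) i = (\<Sum>l<r. y l * X i (n+l))] (mod d))"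
  proof
    fix j show "\<exists>y. j < r \<longrightarrow> (\<forall>i<2*n. [unitv (n+j) i = (\<Sum>l<r. y l * X i (n+l))] (mod d))"
    proof (cases "j < r")
      case True
      obtain y where "\<forall>i<2*n. [unitv (n+j) i = (\<Sum>l<r. y l * X i (n+l))] (mod d)"
        using span_in[OF sub2 True d0] by blast
      then show ?thesis by (intro exI[of _ y]) simp
    qed simp
  qed
  then obtain Y where Y: "\<And>j i. j < r \<Longrightarrow> i < 2*n \<Longrightarrow> [unitv (n+j) i = (\<Sum>l<r. Y j l * X i (n+l))] (mod d)"
    by (metis choice)
  define B where "B l j = (if l < r \<and> j < r then Y j l mod d else 0)" for l j
  have Bm: "B \<in> mats d r" unfolding mats_def B_def using d0 by auto
  have AB: "meq_mod d r (mmul r A B) mident"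
    unfolding meq_mod_def
  proof (intro allI impI)
    fix i j assume i: "i < r" and j: "j < r"
    have "mmul r A B i j = (\<Sum>l<r. X (n+i) (n+l) * (Y j l mod d))"
      unfolding mmul_def A_def B_def using i j by (intro sum.cong) auto
    also have "[\<dots> = (\<Sum>l<r. Y j l * X (n+i) (n+l))] (mod d)"
      by (intro cong_sum) (simp add: cong_def mod_mult_left_eq mult.commute)
    also have "[(\<Sum>l<r. Y j l * X (n+i) (n+l)) = unitv (n+j) (n+i)] (mod d)"
      using Y[OF j, of "n+i"] i rn by (simp add: cong_sym)
    also have "unitv (n+j) (n+i) = mident i j" unfolding unitv_def mident_def by auto
    finally show "[mmul r A B i j = mident i j] (mod d)" .
  qed
  have BA: "meq_mod d r (mmul r B A) mident" by (rule two_sided[OF d AB])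
  have Agl: "A \<in> gl_mod d r" unfolding gl_mod_def using Am Bm AB BA by blast
  have star: "[(\<Sum>i<r. X i j * A i l) = (if j = l then 1 else 0)] (mod d)" if j: "j < 2*n" and l: "l < r" for j l
  proof -
    have "[mmul (2*n) (mtrans X) (mmul (2*n) (Lambda n) X) j (n+l) = Lambda n j (n+l)] (mod d)"
      using XS j l rn unfolding SpC_def meq_mod_def by auto
    moreover have "Lambda n j (n+l) = (if j = l then 1 else 0)" using l rn unfolding Lambda_def by auto
    moreover have "mmul (2*n) (mtrans X) (mmul (2*n) (Lambda n) X) j (n+l) = (\<Sum>i<r. X i j * A i l)"
    proof -
      have "mmul (2*n) (mtrans X) (mmul (2*n) (Lambda n) X) j (n+l)
          = (\<Sum>i<n. X i j * X (i+n) (n+l) - X (i+n) j * X i (n+l))"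
        unfolding Sp_entry symp_expl ..
      also have "\<dots> = (\<Sum>i<n. (if i < r then X i j * A i l else 0))"
      proof (intro sum.cong refl)
        fix i assume "i \<in> {..<n}"
        then have i: "i < n" by simp
        have "X i (n+l) = 0" using colX1[OF i l] .
        moreover have "X (i+n) (n+l) = (if i < r then A i l else 0)"
          using colX2[OF i l] i l unfolding A_def by (auto simp: add.commute)
        ultimately show "X i j * X (i+n) (n+l) - X (i+n) j * X i (n+l) = (if i < r then X i j * A i l else 0)"
          by simp
      qed
      also have "\<dots> = (\<Sum>i<r. X i j * A i l)" by (rule sum_if_lt[OF rn])
      finally show ?thesis .
    qed
    ultimately show ?thesis by simp
  qed
  have c1: "\<forall>i<r. \<forall>j. r \<le> j \<and> j < 2*n \<longrightarrow> X i j = 0"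
  proof (intro allI impI)
    fix i j assume i: "i < r" and h: "r \<le> j \<and> j < 2*n"
    have "\<forall>l<r. [(\<Sum>i<r. X i j * A i l) = 0] (mod d)"
    proof (intro allI impI)
      fix l assume l: "l < r"
      then have "j \<noteq> l" using h by simp
      then show "[(\<Sum>i<r. X i j * A i l) = 0] (mod d)" using star[of j l] h l by simp
    qed
    then have "[X i j = 0] (mod d)" using kill_lemma[OF AB, of "\<lambda>i. X i j"] i by blast
    then show "X i j = 0" using Xr[of i j] i h rn by (intro cong_range_eq) auto
  qed
  have TA: "meq_mod d r (mmul r (mtrans A) X) mident"
    unfolding meq_mod_def
  proof (intro allI impI)
    fix l j assume l: "l < r" and j: "j < r"
    have "mmul r (mtrans A) X l j = (\<Sum>i<r. X i j * A i l)"
      unfolding mmul_def mtrans_def by (simp add: mult.commute)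
    then show "[mmul r (mtrans A) X l j = mident l j] (mod d)"
      using star[of j l] j l rn unfolding mident_def by auto
  qed
  have AT: "meq_mod d r (mmul r X (mtrans A)) mident" by (rule two_sided[OF d TA])
  have c3: "\<forall>i<r. \<forall>j<r. X (n+i) (n+j) = A i j" unfolding A_def by simp
  show ?thesis unfolding T_set_def using X c1 c2 c3 Agl TA AT unfolding r_def by blast
qed

lemma codes_surj:
  assumes d: "d \<ge> 2" and k: "k < n" and C: "C \<in> stab_codes n k d"
  shows "\<exists>M\<in>Sp d n. Phi d n (n-k) M = C"
proof -
  obtain a where Ca: "C = span_mod d (2*n) (n-k) a" and ind: "lin_indep_mod d (2*n) (n-k) a"
    and iso: "\<forall>i<n-k. \<forall>j<n-k. [symp n (a i) (a j) = 0] (mod d)"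
    using C unfolding stab_codes_def by blast
  obtain M0 where M0: "\<forall>j<2*n. \<forall>l<2*n. [symp n (\<lambda>i. M0 i j) (\<lambda>i. M0 i l) = Lambda n j l] (mod d)"
    and col: "\<forall>j<n-k. \<forall>i. M0 i (n+j) = a j i"
    using Tr[OF d _ ind iso] by auto
  have "SpC d n M0" unfolding SpC_def meq_mod_def Sp_entry using M0 by blast
  then have "red d (2*n) M0 \<in> Sp d n" using d by (intro Sp_red) auto
  moreover have "Phi d n (n-k) (red d (2*n) M0) = C"
  proof -
    have "Phi d n (n-k) (red d (2*n) M0) = Phi d n (n-k) M0" by (rule Phi_red) simp
    also have "\<dots> = span_mod d (2*n) (n-k) a" unfolding Phi_def
      by (rule span_cong) (use col in auto)
    finally show ?thesis using Ca by simp
  qed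
  ultimately show ?thesis by blast
qed

lemma fiber_bij:
  assumes d: "d \<ge> 2" and k: "k < n" and M0: "M0 \<in> Sp d n"
  shows "bij_betw (\<lambda>X. red d (2*n) (mmul (2*n) M0 X)) (T_set n k d) {M \<in> Sp d n. Phi d n (n-k) M = Phi d n (n-k) M0}"
proof -
  let ?N = "2*n" and ?r = "n - k"
  have d0: "d > 0" using d by simp
  have rn: "?r \<le> n" by simp
  have M0S: "SpC d n M0" using M0 unfolding Sp_iff by simp
  obtain U where M0U: "meq_mod d ?N (mmul ?N M0 U) mident" and UM0: "meq_mod d ?N (mmul ?N U M0) mident"
    and US: "SpC d n U" using Sp_inv[OF d M0S] by blast
  have TSp: "X \<in> Sp d n" if "X \<in> T_set n k d" for X using that unfolding T_set_def by blast
  have PhiI: "Phi d n ?r mident = C0 d n ?r" by (rule Phi_ident)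
  show ?thesis
  proof (rule bij_betwI')
    fix X Y assume X: "X \<in> T_set n k d" and Y: "Y \<in> T_set n k d"
    show "(red d ?N (mmul ?N M0 X) = red d ?N (mmul ?N M0 Y)) = (X = Y)"
    proof
      assume eq: "red d ?N (mmul ?N M0 X) = red d ?N (mmul ?N M0 Y)"
      have "meq_mod d ?N (mmul ?N M0 X) (mmul ?N M0 Y)"
        using red_meq[of d ?N "mmul ?N M0 X"] red_meq[of d ?N "mmul ?N M0 Y"] eq
        by (metis meq_mod_sym meq_mod_trans)
      then have "meq_mod d ?N (mmul ?N U (mmul ?N M0 X)) (mmul ?N U (mmul ?N M0 Y))"
        by (rule meq_mod_mmul_right)
      then have "meq_mod d ?N (mmul ?N (mmul ?N U M0) X) (mmul ?N (mmul ?N U M0) Y)"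
        by (simp add: mmul_assoc)
      moreover have "meq_mod d ?N (mmul ?N (mmul ?N U M0) X) X"
        using meq_mod_trans[OF meq_mod_mmul_left[OF UM0] meq_mod_ident_left] .
      moreover have "meq_mod d ?N (mmul ?N (mmul ?N U M0) Y) Y"
        using meq_mod_trans[OF meq_mod_mmul_left[OF UM0] meq_mod_ident_left] .
      ultimately have "meq_mod d ?N X Y" by (metis meq_mod_sym meq_mod_trans)
      then show "X = Y" using TSp[OF X] TSp[OF Y] unfolding Sp_iff
        by (intro meq_eq_mats) auto
    qed simp
  next
    fix X assume X: "X \<in> T_set n k d"
    have XS: "SpC d n X" using TSp[OF X] unfolding Sp_iff by simp
    have "red d ?N (mmul ?N M0 X) \<in> Sp d n" using d0 SpC_mul[OF M0S XS] by (rule Sp_red)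
    moreover have "Phi d n ?r (red d ?N (mmul ?N M0 X)) = Phi d n ?r M0"
    proof -
      have PX: "Phi d n ?r X = Phi d n ?r mident" using TC1[OF d k X] PhiI by simp
      have "Phi d n ?r (red d ?N (mmul ?N M0 X)) = Phi d n ?r (mmul ?N M0 X)" by (rule Phi_red) simp
      also have "\<dots> = Phi d n ?r (mmul ?N M0 mident)"
        using Phi_transform[of d n ?r X mident M0] Phi_transform[of d n ?r mident X M0] PX d0 by auto
      also have "\<dots> = Phi d n ?r M0" by (rule Phi_cong) (auto intro: meq_mod_ident_right)
      finally show ?thesis .
    qed
    ultimately show "red d ?N (mmul ?N M0 X) \<in> {M \<in> Sp d n. Phi d n ?r M = Phi d n ?r M0}" by blast
  next
    fix M assume "M \<in> {M \<in> Sp d n. Phi d n ?r M = Phi d n ?r M0}"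
    then have M: "M \<in> Sp d n" and PM: "Phi d n ?r M = Phi d n ?r M0" by auto
    have MS: "SpC d n M" and Mm: "M \<in> mats d ?N" using M unfolding Sp_iff by auto
    define X where "X = red d ?N (mmul ?N U M)"
    have XSp: "X \<in> Sp d n" unfolding X_def using d0 SpC_mul[OF US MS] by (rule Sp_red)
    have "Phi d n ?r X = Phi d n ?r (mmul ?N U M)" unfolding X_def by (rule Phi_red) simp
    also have "\<dots> = Phi d n ?r (mmul ?N U M0)"
      using Phi_transform[of d n ?r M M0 U] Phi_transform[of d n ?r M0 M U] PM d0 by auto
    also have "\<dots> = Phi d n ?r mident" by (rule Phi_cong) (use UM0 in auto)
    finally have "Phi d n ?r X = C0 d n ?r" using PhiI by simp
    then have XT: "X \<in> T_set n k d" by (rule TC2[OF d k XSp])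
    have "meq_mod d ?N (mmul ?N M0 X) (mmul ?N M0 (mmul ?N U M))"
      unfolding X_def by (rule meq_mod_mmul_right[OF red_meq])
    also have "mmul ?N M0 (mmul ?N U M) = mmul ?N (mmul ?N M0 U) M" by (simp add: mmul_assoc)
    finally have 1: "meq_mod d ?N (mmul ?N M0 X) (mmul ?N (mmul ?N M0 U) M)" .
    have 2: "meq_mod d ?N (mmul ?N (mmul ?N M0 U) M) M"
      using meq_mod_trans[OF meq_mod_mmul_left[OF M0U] meq_mod_ident_left] .
    have "meq_mod d ?N (red d ?N (mmul ?N M0 X)) M"
      using meq_mod_trans[OF red_meq meq_mod_trans[OF 1 2]] .
    then have "red d ?N (mmul ?N M0 X) = M" using red_mats[OF d0] Mm by (intro meq_eq_mats) auto
    then show "\<exists>X\<in>T_set n k d. M = red d ?N (mmul ?N M0 X)" using XT by blast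
  qed
qed

theorem lemma1:
  fixes n k :: nat and d :: int
  assumes "d \<ge> 2" and "n \<ge> 1" and "k < n"
  shows "real (N_codes n k d) = real (card (Sp d n)) / real (card (T_set n k d))"
proof -
  note d = assms(1) and k = assms(3)
  let ?N = "2*n" and ?r = "n - k"
  let ?codes = "stab_codes n k d" and ?S = "Sp d n" and ?T = "T_set n k d"
  have d0: "d > 0" using d by simp
  have finS: "finite ?S" by (rule finite_subset[OF _ finite_mats[of d ?N]]) (auto simp: Sp_def)
  have finT: "finite ?T" by (rule finite_subset[OF _ finS]) (auto simp: T_set_def)
  have fincodes: "finite ?codes"
  proof (rule finite_subset[of _ "Pow (vecs d ?N)"])
    show "?codes \<subseteq> Pow (vecs d ?N)" unfolding stab_codes_def using span_subset_vecs by blast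
  qed (simp add: finite_vecs)
  define fib where "fib C = {M \<in> ?S. Phi d n ?r M = C}" for C
  have Sunion: "?S = (\<Union>C\<in>?codes. fib C)"
    unfolding fib_def using Phi_codes[OF d k] by blast
  have fibcard: "card (fib C) = card ?T" if C: "C \<in> ?codes" for C
  proof -
    obtain M0 where M0: "M0 \<in> ?S" and PM0: "Phi d n ?r M0 = C" using codes_surj[OF d k C] by blast
    have "bij_betw (\<lambda>X. red d ?N (mmul ?N M0 X)) ?T (fib C)"
      using fiber_bij[OF d k M0] unfolding fib_def PM0 .
    then show ?thesis by (simp add: bij_betw_same_card)
  qed
  have "card ?S = (\<Sum>C\<in>?codes. card (fib C))"
    unfolding Sunion
  proof (rule card_UN_disjoint[OF fincodes])
    show "\<forall>C\<in>?codes. finite (fib C)" unfolding fib_def using finS by auto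
    show "\<forall>C\<in>?codes. \<forall>C'\<in>?codes. C \<noteq> C' \<longrightarrow> fib C \<inter> fib C' = {}" unfolding fib_def by auto
  qed
  also have "\<dots> = card ?codes * card ?T" using fibcard by simp
  finally have cardS: "card ?S = card ?codes * card ?T" .
  have "red d ?N mident \<in> ?T"
  proof (rule TC2[OF d k])
    have "SpC d n mident" unfolding SpC_def mtrans_ident
      using meq_mod_trans[OF meq_mod_ident_left meq_mod_ident_right] .
    then show "red d ?N mident \<in> ?S" by (rule Sp_red[OF d0])
    show "Phi d n ?r (red d ?N mident) = C0 d n ?r"
      using Phi_red[of ?r n d mident] Phi_ident[of d n ?r] by simp
  qed
  then have "card ?T > 0" using finT card_gt_0_iff by blast
  then show ?thesis unfolding N_codes_def cardS by simp
qed

end
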